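(* Let $q\ge1$, $k\ge2$ be integers, $\mathcal{A}$ as in the context, and $p_1\ge3$ a prime. For the type-$\mathcal{A}$ random walk on $\mathbb{Z}^k$ and $0\le a\le p_1-1$, let $\overline{S}_{n,k}(a;p_1)=\frac1n\sum_{1\le i\le n,\ i\equiv a\pmod{p_1}}X_i$. Then for every $\varepsilon>0$, as $n\to\infty$, $$\mathbb{E}\big(\overline{S}_{n,k}(0;p_1)\big)=\frac{p_1^{k-1}-1}{p_1^k-1}\cdot\frac1{\zeta(k)}+O_{\mathcal{A},k,q,\varepsilon}(n^{-1/2+\varepsilon}),$$ $$\mathbb{E}\big(\overline{S}_{n,k}(a;p_1)\big)=\frac{p_1^{k-1}}{p_1^k-1}\cdot\frac1{\zeta(k)}+O_{\mathcal{A},k,q,\varepsilon}(n^{-1/2+\varepsilon})\quad\text{if } a\ne0.$$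
   Context: $\mathcal{A}=\{\boldsymbol{\alpha}_1,\dots,\boldsymbol{\alpha}_q\}$ is a finite set of vectors $\boldsymbol{\alpha}_t=(\alpha_{t,1},\dots,\alpha_{t,k})$ with $0<\alpha_{t,j}<1$ for all $j$ and $\alpha_{t,1}+\cdots+\alpha_{t,k}=1$. For $\boldsymbol{\alpha}=(\alpha_1,\dots,\alpha_k)$ of this form, a type-$\boldsymbol{\alpha}$ step $\mathbf{w}(\boldsymbol{\alpha})$ is a random vector equal to the $j$-th standard basis vector of $\mathbb{Z}^k$ with probability $\alpha_j$. The type-$\mathcal{A}$ random walk is $\mathbf{p}_0=(0,\dots,0)$, $\mathbf{p}_i=\mathbf{p}_{i-1}+\mathbf{w}(\boldsymbol{\alpha}'_i)$ for $i\ge1$, where at each step a type $\boldsymbol{\alpha}'_i\in\mathcal{A}$ is chosen and the steps are independent. A lattice point $\mathbf{n}=(n_1,\dots,n_k)\in\mathbb{Z}^k$ is visible if there is no other lattice point on the segment joining it to the origin (equivalently $\gcd(n_1,\dots,n_k)=1$). $X_i=1$ if $\mathbf{p}_i$ is visible and $X_i=0$ otherwise. $\zeta$ is the Riemann zeta function. *)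

theory Defs
  imports "HOL-Probability.Probability"
begin

definition valid_type :: "nat \<Rightarrow> real list \<Rightarrow> bool" where
  "valid_type k \<alpha> \<longleftrightarrow> length \<alpha> = k \<and> (\<forall>x\<in>set \<alpha>. 0 < x \<and> x < 1) \<and> sum_list \<alpha> = 1"

text \<open>Distribution of the coordinate index j chosen by a type-alpha step (j-th basis vector
with probability alpha_j).\<close>
definition step_index_pmf :: "real list \<Rightarrow> nat pmf" where
  "step_index_pmf \<alpha> = embed_pmf (\<lambda>j. if j < length \<alpha> then \<alpha> ! j else 0)"

text \<open>Distribution of the position p_i of the type-A random walk in Z^k, where sigma i is
the type used at step i (i >= 1); steps are independent.  Points are int lists of length k.\<close>
fun walk_pmf :: "nat \<Rightarrow> (nat \<Rightarrow> real list) \<Rightarrow> nat \<Rightarrow> int list pmf" where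
  "walk_pmf k \<sigma> 0 = return_pmf (replicate k 0)"
| "walk_pmf k \<sigma> (Suc i) =
     bind_pmf (walk_pmf k \<sigma> i)
       (\<lambda>p. map_pmf (\<lambda>j. p[j := p ! j + 1]) (step_index_pmf (\<sigma> (Suc i))))"

definition visible :: "int list \<Rightarrow> bool" where
  "visible p \<longleftrightarrow> Gcd (set p) = 1"

definition EXvis :: "nat \<Rightarrow> (nat \<Rightarrow> real list) \<Rightarrow> nat \<Rightarrow> real" where
  "EXvis k \<sigma> i = measure_pmf.expectation (walk_pmf k \<sigma> i) (\<lambda>p. if visible p then 1 else 0)"

definition ESbar :: "nat \<Rightarrow> (nat \<Rightarrow> real list) \<Rightarrow> nat \<Rightarrow> nat \<Rightarrow> nat \<Rightarrow> real" where
  "ESbar k \<sigma> n a p1 = (1 / real n) * (\<Sum>i\<in>{i\<in>{1..n}. i mod p1 = a}. EXvis k \<sigma> i)"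

definition zeta_nat :: "nat \<Rightarrow> real" where
  "zeta_nat s = (\<Sum>m. 1 / real (Suc m) ^ s)"

end

theory Submission
  imports Defs
begin



definition mu :: "nat \<Rightarrow> real" where
  "mu n = (if n > 0 \<and> \<Prod>(prime_factors n) = n then (-1) ^ card (prime_factors n) else 0)"

lemma prod_primes_dvd:
  fixes n :: nat
  assumes "finite S" "\<And>p. p \<in> S \<Longrightarrow> prime p" "\<And>p. p \<in> S \<Longrightarrow> p dvd n"
  shows "\<Prod>S dvd n"
  using assms
proof (induction S rule: finite_induct)
  case empty then show ?case by simp
next
  case (insert p S)
  have "\<not> p dvd \<Prod>S"
  proof
    assume "p dvd \<Prod>S"
    then obtain q where "q \<in> S" "p dvd q"
      using insert by (metis prime_dvd_prod_iff prime_elem_nat_iff insert.prems(1) insertI1)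
    then have "p = q" using insert by (metis insertCI primes_dvd_imp_eq)
    then show False using insert \<open>q \<in> S\<close> by simp
  qed
  then have "coprime p (\<Prod>S)" using insert by (simp add: prime_imp_coprime)
  then show ?case using insert by (simp add: divides_mult)
qed

lemma prime_factors_prod_primes:
  fixes S :: "nat set"
  assumes "finite S" "\<And>p. p \<in> S \<Longrightarrow> prime p"
  shows "prime_factors (\<Prod>S) = S"
  using assms
proof (induction S rule: finite_induct)
  case empty then show ?case by simp
next
  case (insert p S)
  have "\<Prod>S \<noteq> 0" using insert by (metis not_prime_0 prod_zero_iff insertCI)
  moreover have "prime p" using insert.prems by simp
  then have "p \<noteq> 0" by auto
  ultimately show ?case using insert
    by (simp add: prime_factors_product prime_prime_factors)
qed

lemma prod_prime_factors_dvd: "(n::nat) > 0 \<Longrightarrow> \<Prod>(prime_factors n) dvd n"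
  by (rule prod_primes_dvd) (auto simp: prime_factors_dvd)

lemma sum_pow_minus_one:
  assumes "finite A" "A \<noteq> {}"
  shows "(\<Sum>X\<in>Pow A. (-1::real) ^ card X) = 0"
proof -
  have "(\<Prod>x\<in>A. (-1::real) + 1) = (\<Sum>X\<in>Pow A. prod (\<lambda>_. -1) X * prod (\<lambda>_. 1) (A - X))"
    by (rule prod_add[OF assms(1)])
  moreover have "(\<Prod>x\<in>A. (-1::real) + 1) = 0" using assms by (simp add: card_gt_0_iff)
  ultimately show ?thesis by simp
qed

lemma mu_divisors_image:
  assumes "n > 0"
  shows "{d. d dvd n \<and> mu d \<noteq> 0} = (\<lambda>S. \<Prod>S) ` Pow (prime_factors n)"
proof safe
  fix d assume d: "d dvd n" "mu d \<noteq> 0"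
  then have "d > 0" "\<Prod>(prime_factors d) = d" by (auto simp: mu_def split: if_splits)
  moreover have "prime_factors d \<subseteq> prime_factors n"
    using d assms by (metis dvd_prime_factors gr_implies_not0)
  ultimately show "d \<in> (\<lambda>S. \<Prod>S) ` Pow (prime_factors n)"
    by (intro image_eqI[of _ _ "prime_factors d"]) auto
next
  fix S assume S: "S \<subseteq> prime_factors n"
  have fin: "finite S" using S finite_subset by blast
  show "\<Prod>S dvd n" using S fin by (intro prod_primes_dvd) auto
  have "prime_factors (\<Prod>S) = S" using S fin by (intro prime_factors_prod_primes) auto
  moreover have "\<Prod>S > 0" using S by (intro prod_pos) (auto intro: prime_gt_0_nat)
  ultimately show "mu (\<Prod>S) = 0 \<Longrightarrow> False" by (simp add: mu_def)
qed

lemma mu_sum_divisors: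
  assumes "n > 0"
  shows "(\<Sum>d\<in>{d. d dvd n}. mu d) = (if n = 1 then 1 else 0)"
proof -
  have fin: "finite {d. d dvd n}" using assms by simp
  have "(\<Sum>d\<in>{d. d dvd n}. mu d) = (\<Sum>d\<in>{d. d dvd n \<and> mu d \<noteq> 0}. mu d)"
    by (rule sum.mono_neutral_right[OF fin]) auto
  also have "\<dots> = (\<Sum>d\<in>(\<lambda>S. \<Prod>S) ` Pow (prime_factors n). mu d)"
    using mu_divisors_image[OF assms] by simp
  also have "\<dots> = (\<Sum>S\<in>Pow (prime_factors n). mu (\<Prod>S))"
  proof (rule sum.reindex_cong[where l="\<lambda>S. \<Prod>S"])
    show "inj_on (\<lambda>S. \<Prod>S) (Pow (prime_factors n))"
      by (rule inj_on_inverseI[where g=prime_factors])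
         (auto intro!: prime_factors_prod_primes intro: finite_subset)
  qed auto
  also have "\<dots> = (\<Sum>S\<in>Pow (prime_factors n). (-1) ^ card S)"
  proof (rule sum.cong[OF refl])
    fix S assume S: "S \<in> Pow (prime_factors n)"
    have fin: "finite S" using S finite_subset by blast
    have "prime_factors (\<Prod>S) = S" using S fin by (intro prime_factors_prod_primes) auto
    moreover have "\<Prod>S > 0" using S by (intro prod_pos) (auto intro: prime_gt_0_nat)
    ultimately show "mu (\<Prod>S) = (-1) ^ card S" by (simp add: mu_def)
  qed
  also have "\<dots> = (if n = 1 then 1 else 0)"
  proof (cases "n = 1")
    case True then show ?thesis by simp
  next
    case False
    then obtain p where "prime p" "p dvd n" using prime_factor_nat by blast
    then have "p \<in> prime_factors n" using assms by (simp add: in_prime_factors_iff)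
    then have "prime_factors n \<noteq> {}" by blast
    then show ?thesis using False sum_pow_minus_one[of "prime_factors n"] by simp
  qed
  finally show ?thesis .
qed

lemma mu_abs_le: "\<bar>mu n\<bar> \<le> 1"
  by (simp add: mu_def)

lemma mu_mult_prime:
  assumes "prime p" "\<not> p dvd d" "d > 0"
  shows "mu (p * d) = - mu d"
proof -
  have pf: "prime_factors (p * d) = insert p (prime_factors d)"
    using assms by (simp add: prime_factors_product prime_prime_factors prime_gt_0_nat)
  have notin: "p \<notin> prime_factors d" using assms by auto
  have "\<Prod>(prime_factors (p*d)) = p * \<Prod>(prime_factors d)" using pf notin by simp
  then have "(\<Prod>(prime_factors (p*d)) = p * d) = (\<Prod>(prime_factors d) = d)"
    using assms prime_gt_0_nat by auto
  moreover have "card (prime_factors (p*d)) = Suc (card (prime_factors d))" using pf notin by simp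
  ultimately show ?thesis using assms prime_gt_0_nat by (simp add: mu_def)
qed

lemma mu_mult_prime_dvd:
  assumes "prime p" "p dvd d" "d > 0"
  shows "mu (p * d) = 0"
proof -
  have pf: "prime_factors (p * d) = prime_factors d"
    using assms by (auto simp: prime_factors_product prime_prime_factors prime_gt_0_nat)
  have "\<Prod>(prime_factors d) \<le> d" using prod_prime_factors_dvd assms dvd_imp_le by blast
  also have "d < p * d" using assms prime_gt_1_nat by simp
  finally show ?thesis using pf by (simp add: mu_def)
qed



lemma divisor_sum_swap:
  fixes f :: "nat \<Rightarrow> nat \<Rightarrow> 'a::comm_monoid_add"
  shows "(\<Sum>i\<in>{i\<in>{1..n}. P i}. \<Sum>d\<in>{d. d dvd i}. f d i)
       = (\<Sum>d\<in>{1..n}. \<Sum>j\<in>{j\<in>{1..n div d}. P (d*j)}. f d (d*j))"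
proof -
  have "(\<Sum>i\<in>{i\<in>{1..n}. P i}. \<Sum>d\<in>{d. d dvd i}. f d i)
      = (\<Sum>i\<in>{i\<in>{1..n}. P i}. \<Sum>d\<in>{d\<in>{1..n}. d dvd i}. f d i)"
  proof (rule sum.cong[OF refl])
    fix i assume "i \<in> {i\<in>{1..n}. P i}"
    then have "{d. d dvd i} = {d\<in>{1..n}. d dvd i}"
      by (auto dest: dvd_imp_le intro: Nat.gr0I)
    then show "(\<Sum>d\<in>{d. d dvd i}. f d i) = (\<Sum>d\<in>{d\<in>{1..n}. d dvd i}. f d i)" by simp
  qed
  also have "\<dots> = (\<Sum>d\<in>{1..n}. \<Sum>i\<in>{i\<in>{i\<in>{1..n}. P i}. d dvd i}. f d i)"
    by (rule sum.swap_restrict) auto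
  also have "\<dots> = (\<Sum>d\<in>{1..n}. \<Sum>j\<in>{j\<in>{1..n div d}. P (d*j)}. f d (d*j))"
  proof (rule sum.cong[OF refl])
    fix d assume d: "d \<in> {1..n}"
    have "{i\<in>{i\<in>{1..n}. P i}. d dvd i} = (\<lambda>j. d*j) ` {j\<in>{1..n div d}. P (d*j)}"
    proof safe
      fix i assume i: "i \<in> {1..n}" "P i" "d dvd i"
      then obtain j where j: "i = d*j" by blast
      have "j \<ge> 1" using i j by (cases j) auto
      moreover have "j \<le> n div d" using i j d
        by (metis atLeastAtMost_iff div_le_mono nonzero_mult_div_cancel_left not_one_le_zero)
      ultimately show "i \<in> (\<lambda>j. d*j) ` {j\<in>{1..n div d}. P (d*j)}" using i j by auto
    next
      fix j assume j: "j \<in> {1..n div d}" "P (d*j)"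
      show "d*j \<in> {1..n}" using j d
        by (auto simp: less_eq_div_iff_mult_less_eq mult.commute)
    qed auto
    moreover have "inj_on (\<lambda>j. d*j) {j\<in>{1..n div d}. P (d*j)}" using d by (auto simp: inj_on_def)
    ultimately show "(\<Sum>i\<in>{i\<in>{i\<in>{1..n}. P i}. d dvd i}. f d i) = (\<Sum>j\<in>{j\<in>{1..n div d}. P (d*j)}. f d (d*j))"
      by (simp add: sum.reindex)
  qed
  finally show ?thesis .
qed

lemma sum_inv_sqrt_le: "(\<Sum>j\<in>{1..m}. 1 / sqrt (real j)) \<le> 2 * sqrt (real m)"
proof (induction m)
  case 0 then show ?case by simp
next
  case (Suc m)
  have key: "1 / sqrt (real (Suc m)) \<le> 2 * sqrt (real (Suc m)) - 2 * sqrt (real m)"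
  proof -
    have a: "sqrt (real m) \<le> sqrt (real (Suc m))" by simp
    have pos: "sqrt (real (Suc m)) > 0" by simp
    have "sqrt (real m) * sqrt (real (Suc m)) = sqrt (real m * real (Suc m))" by (simp add: real_sqrt_mult)
    also have "\<dots> \<le> sqrt ((real m + 1/2)^2)" by (subst real_sqrt_le_iff) (simp add: power2_eq_square algebra_simps)
    also have "\<dots> = real m + 1/2" by simp
    finally have "sqrt (real m) * sqrt (real (Suc m)) \<le> real m + 1/2" .
    then have "2 * real (Suc m) - 2 * sqrt (real m) * sqrt (real (Suc m)) \<ge> 1" by simp
    then have "(2 * sqrt (real (Suc m)) - 2 * sqrt (real m)) * sqrt (real (Suc m)) \<ge> 1"
      by (simp add: algebra_simps)
    then show ?thesis using pos by (simp add: field_simps)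
  qed
  have "(\<Sum>j\<in>{1..Suc m}. 1 / sqrt (real j)) = (\<Sum>j\<in>{1..m}. 1 / sqrt (real j)) + 1 / sqrt (real (Suc m))"
    by simp
  also have "\<dots> \<le> 2 * sqrt (real (Suc m))" using Suc key by linarith
  finally show ?case .
qed

lemma sum_inv_le_sqrt: "(\<Sum>j\<in>{1..m}. 1 / real j) \<le> 2 * sqrt (real m)"
proof -
  have "(\<Sum>j\<in>{1..m}. 1 / real j) \<le> (\<Sum>j\<in>{1..m}. 1 / sqrt (real j))"
  proof (rule sum_mono)
    fix j assume "j \<in> {1..m}"
    then have j1: "1 \<le> sqrt (real j)" "sqrt (real j) > 0" by auto
    have "sqrt (real j) * 1 \<le> sqrt (real j) * sqrt (real j)" using j1 by (intro mult_left_mono) auto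
    then have "sqrt (real j) \<le> real j" by simp
    then have "sqrt (real j) \<le> real j" "sqrt (real j) > 0" using j1 by auto
    then show "1 / real j \<le> 1 / sqrt (real j)" by (simp add: frac_le)
  qed
  then show ?thesis using sum_inv_sqrt_le[of m] by linarith
qed

lemma harm_le_ln: "m \<ge> 1 \<Longrightarrow> (\<Sum>j\<in>{1..m}. 1 / real j) \<le> 1 + ln (real m)"
proof (induction m rule: dec_induct)
  case base then show ?case by simp
next
  case (step m)
  have "1 / real (Suc m) \<le> ln (real (Suc m)) - ln (real m)"
  proof -
    have "ln (real m / real (Suc m)) \<le> real m / real (Suc m) - 1"
      using step by (intro ln_le_minus_one) auto
    moreover have "real m / real (Suc m) - 1 = - (1 / real (Suc m))" by (simp add: field_simps)
    moreover have "ln (real m / real (Suc m)) = ln (real m) - ln (real (Suc m))"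
      using step by (simp add: ln_div)
    ultimately show ?thesis by linarith
  qed
  then show ?case using step by simp
qed



definition Zp :: "nat \<Rightarrow> nat \<Rightarrow> real" where
  "Zp k T = (\<Sum>m\<in>{1..T}. 1 / real m ^ k)"

lemma Zp_alt: "Zp k T = (\<Sum>m<T. 1 / real (Suc m) ^ k)"
proof -
  have "{1..T} = Suc ` {..<T}" by (simp add: image_Suc_lessThan)
  then show ?thesis unfolding Zp_def by (simp add: sum.reindex)
qed

lemma zeta_summable: "k \<ge> 2 \<Longrightarrow> summable (\<lambda>m. 1 / real (Suc m) ^ k)"
proof -
  assume k: "k \<ge> 2"
  have "summable (\<lambda>n. inverse (real n ^ k))" using inverse_power_summable[OF k] by simp
  then have "summable (\<lambda>m. inverse (real (Suc m) ^ k))"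
    by (subst summable_Suc_iff) 
  then show ?thesis by (simp add: divide_inverse)
qed

lemma zeta_tail:
  assumes k: "k \<ge> 2" and T: "T \<ge> 1"
  shows "0 \<le> zeta_nat k - Zp k T" "zeta_nat k - Zp k T \<le> 1 / real T"
proof -
  let ?f = "\<lambda>m. 1 / real (Suc m) ^ k"
  have sf: "summable ?f" using zeta_summable[OF k] .
  have split: "zeta_nat k = (\<Sum>n. ?f (n + T)) + Zp k T"
    unfolding zeta_nat_def Zp_alt using suminf_split_initial_segment[OF sf, of T] by simp
  have st: "summable (\<lambda>n. ?f (n + T))" using sf by (subst summable_iff_shift)
  show "0 \<le> zeta_nat k - Zp k T" using split suminf_nonneg[OF st] by simp
  have tel: "(\<lambda>n. 1 / real (n + T) - 1 / real (Suc n + T)) sums (1 / real T)"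
  proof -
    have lim: "(\<lambda>n. - (1 / real (n + T))) \<longlonglongrightarrow> 0"
    proof -
      have "(\<lambda>n. 1 / real (n + T)) \<longlonglongrightarrow> 0"
        using LIMSEQ_ignore_initial_segment[OF lim_inverse_n', of T]
        by (simp add: divide_inverse add.commute)
      then show ?thesis using tendsto_minus[of _ 0] by fastforce
    qed
    have "(\<lambda>n. - (1 / real (Suc n + T)) - - (1 / real (n + T))) sums (0 - - (1 / real (0 + T)))"
      by (rule telescope_sums[OF lim])
    then show ?thesis by simp
  qed
  have le: "?f (n + T) \<le> 1 / real (n + T) - 1 / real (Suc n + T)" for n
  proof -
    have pos: "real (n + T) > 0" using T by simp
    have "real (Suc n + T) * real (n + T) \<le> real (Suc n + T) ^ 2"
      by (simp add: power2_eq_square)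
    also have "\<dots> \<le> real (Suc n + T) ^ k" using k by (intro power_increasing) auto
    finally have "real (Suc n + T) * real (n + T) \<le> real (Suc n + T) ^ k" .
    then have "1 / real (Suc n + T) ^ k \<le> 1 / (real (Suc n + T) * real (n + T))"
      using pos by (intro divide_left_mono) auto
    also have "\<dots> = 1 / real (n + T) - 1 / real (Suc n + T)"
      using pos by (simp add: field_simps)
    finally show ?thesis by (simp add: add.commute)
  qed
  have "(\<Sum>n. ?f (n + T)) \<le> 1 / real T"
    using suminf_le[OF le st sums_summable[OF tel]] sums_unique[OF tel] by simp
  then show "zeta_nat k - Zp k T \<le> 1 / real T" using split by simp
qed

lemma zeta_ge_1: "k \<ge> 2 \<Longrightarrow> zeta_nat k \<ge> 1"
  using zeta_tail(1)[of k 1] by (simp add: Zp_def)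

lemma convolution_identity:
  assumes "N \<ge> 1"
  shows "(\<Sum>d\<in>{1..N}. mu d / real d ^ k * Zp k (N div d)) = 1"
proof -
  have "(\<Sum>i\<in>{i\<in>{1..N}. True}. \<Sum>d\<in>{d. d dvd i}. mu d / real i ^ k)
      = (\<Sum>d\<in>{1..N}. \<Sum>j\<in>{j\<in>{1..N div d}. True}. mu d / real (d*j) ^ k)"
    by (rule divisor_sum_swap)
  moreover have "(\<Sum>i\<in>{i\<in>{1..N}. True}. \<Sum>d\<in>{d. d dvd i}. mu d / real i ^ k) = 1"
  proof -
    have "(\<Sum>i\<in>{i\<in>{1..N}. True}. \<Sum>d\<in>{d. d dvd i}. mu d / real i ^ k)
        = (\<Sum>i\<in>{1..N}. (if i = 1 then 1 else 0) / real i ^ k)"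
      by (intro sum.cong) (auto simp: sum_divide_distrib[symmetric] mu_sum_divisors)
    also have "\<dots> = (\<Sum>i\<in>{1..N}. if i = 1 then 1 else 0)" by (intro sum.cong) auto
    also have "\<dots> = 1" using assms by simp
    finally show ?thesis .
  qed
  moreover have "(\<Sum>j\<in>{j\<in>{1..N div d}. True}. mu d / real (d*j) ^ k) = mu d / real d ^ k * Zp k (N div d)" for d
  proof -
    have e: "{j\<in>{1..N div d}. True} = {1..N div d}" by blast
    show ?thesis unfolding e Zp_def by (simp add: sum_distrib_left power_mult_distrib)
  qed
  ultimately show ?thesis by simp
qed

definition Mp :: "nat \<Rightarrow> nat \<Rightarrow> real" where
  "Mp k N = (\<Sum>d\<in>{1..N}. mu d / real d ^ k)"

lemma Mp_bound:
  assumes k: "k \<ge> 2" and N: "N \<ge> 1"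
  shows "\<bar>Mp k N - 1 / zeta_nat k\<bar> \<le> 4 / sqrt (real N)"
proof -
  let ?Z = "zeta_nat k"
  have Z1: "?Z \<ge> 1" using zeta_ge_1[OF k] .
  have "(\<Sum>d\<in>{1..N}. mu d / real d ^ k * (?Z - Zp k (N div d)))
      = (\<Sum>d\<in>{1..N}. ?Z * (mu d / real d ^ k)) - (\<Sum>d\<in>{1..N}. mu d / real d ^ k * Zp k (N div d))"
    by (simp add: right_diff_distrib sum_subtractf mult.commute)
  also have "\<dots> = ?Z * Mp k N - 1" using convolution_identity[OF N, of k]
    by (simp add: Mp_def sum_distrib_left)
  finally have "?Z * Mp k N - 1 = (\<Sum>d\<in>{1..N}. mu d / real d ^ k * (?Z - Zp k (N div d)))" by simp
  also have "\<bar>\<dots>\<bar> \<le> (\<Sum>d\<in>{1..N}. \<bar>mu d / real d ^ k * (?Z - Zp k (N div d))\<bar>)"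
    by (rule sum_abs)
  also have "\<dots> \<le> (\<Sum>d\<in>{1..N}. 2 / real N * (1 / real d))"
  proof (rule sum_mono)
    fix d assume d: "d \<in> {1..N}"
    have dv: "N div d \<ge> 1" using d by (simp add: div_greater_zero_iff Suc_le_eq)
    have t: "0 \<le> ?Z - Zp k (N div d)" "?Z - Zp k (N div d) \<le> 1 / real (N div d)"
      using zeta_tail[OF k dv] by auto
    have e1: "d * (N div d) + N mod d = N" by (rule mult_div_mod_eq)
    have e2: "N mod d < d" using d by simp
    have "N < d + d * (N div d)" using e1 e2 by linarith
    moreover have "d \<le> d * (N div d)" using dv by simp
    moreover have "2 * d * (N div d) = d * (N div d) + d * (N div d)" by simp
    ultimately have "N < 2 * d * (N div d)" by linarith
    then have lt: "real N < 2 * real d * real (N div d)" by (metis of_nat_less_iff of_nat_mult of_nat_numeral)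
    have q: "1 / real (N div d) \<le> 2 * real d / real N"
      using lt dv d by (simp add: field_simps)
    have "\<bar>mu d\<bar> * (?Z - Zp k (N div d)) \<le> 1 * (1 / real (N div d))"
      using t mu_abs_le[of d] by (intro mult_mono) auto
    also have "\<dots> \<le> 2 * real d / real N" using q by simp
    finally have m1: "\<bar>mu d\<bar> * (?Z - Zp k (N div d)) \<le> 2 * real d / real N" .
    have dk: "real d ^ 2 \<le> real d ^ k" using d k by (intro power_increasing) auto
    have "\<bar>mu d / real d ^ k * (?Z - Zp k (N div d))\<bar> = \<bar>mu d\<bar> * (?Z - Zp k (N div d)) / real d ^ k"
      using t by (simp add: abs_mult)
    also have "\<dots> \<le> (2 * real d / real N) / real d ^ k" using m1 by (intro divide_right_mono) auto
    also have "\<dots> \<le> (2 * real d / real N) / real d ^ 2" using dk d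
      by (intro divide_left_mono) auto
    also have "\<dots> = 2 / real N * (1 / real d)" using d by (simp add: power2_eq_square field_simps)
    finally show "\<bar>mu d / real d ^ k * (?Z - Zp k (N div d))\<bar> \<le> 2 / real N * (1 / real d)" .
  qed
  also have "\<dots> = 2 / real N * (\<Sum>d\<in>{1..N}. 1 / real d)" by (simp add: sum_distrib_left)
  also have "\<dots> \<le> 2 / real N * (2 * sqrt (real N))"
    using sum_inv_le_sqrt[of N] by (intro mult_left_mono) auto
  also have "\<dots> = 4 / sqrt (real N)" using N
    by (simp add: field_simps)
  finally have "\<bar>?Z * Mp k N - 1\<bar> \<le> 4 / sqrt (real N)" .
  moreover have "\<bar>Mp k N - 1 / ?Z\<bar> = \<bar>?Z * Mp k N - 1\<bar> / ?Z" using Z1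
    by (simp add: field_simps abs_divide)
  moreover have "\<bar>?Z * Mp k N - 1\<bar> / ?Z \<le> \<bar>?Z * Mp k N - 1\<bar>" using Z1
    using divide_left_mono[of 1 ?Z "\<bar>?Z * Mp k N - 1\<bar>"] by simp
  ultimately show ?thesis by linarith
qed



definition Mq :: "nat \<Rightarrow> nat \<Rightarrow> nat \<Rightarrow> real" where
  "Mq k p N = (\<Sum>d\<in>{d\<in>{1..N}. \<not> p dvd d}. mu d / real d ^ k)"

lemma multiples_image:
  fixes p N :: nat
  assumes "p > 0"
  shows "{d\<in>{1..N}. p dvd d} = (\<lambda>e. p * e) ` {1..N div p}"
proof safe
  fix d assume d: "d \<in> {1..N}" "p dvd d"
  then obtain e where e: "d = p * e" by blast
  have "e \<noteq> 0" using d(1) e by (intro notI) simp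
  then have "e \<ge> 1" by simp
  moreover have "e \<le> N div p" using d e assms by (simp add: less_eq_div_iff_mult_less_eq mult.commute)
  ultimately show "d \<in> (\<lambda>e. p * e) ` {1..N div p}" using e by auto
next
  fix e assume "e \<in> {1..N div p}"
  then show "p * e \<in> {1..N}" using assms by (auto simp: less_eq_div_iff_mult_less_eq mult.commute)
qed auto

lemma Mp_Mq:
  assumes p: "prime p"
  shows "Mp k N = Mq k p N - Mq k p (N div p) / real p ^ k"
proof -
  have p0: "p > 0" using p prime_gt_0_nat by blast
  have U: "{1..N} = {d\<in>{1..N}. \<not> p dvd d} \<union> {d\<in>{1..N}. p dvd d}" by auto
  have "Mp k N = (\<Sum>d\<in>{d\<in>{1..N}. \<not> p dvd d}. mu d / real d ^ k) + (\<Sum>d\<in>{d\<in>{1..N}. p dvd d}. mu d / real d ^ k)"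
    unfolding Mp_def by (subst U, rule sum.union_disjoint) auto
  also have "(\<Sum>d\<in>{d\<in>{1..N}. p dvd d}. mu d / real d ^ k) = (\<Sum>e\<in>{1..N div p}. mu (p*e) / real (p*e) ^ k)"
    unfolding multiples_image[OF p0] using p0 by (subst sum.reindex) (auto simp: inj_on_def)
  also have "\<dots> = (\<Sum>e\<in>{1..N div p}. if p dvd e then 0 else - (mu e / real e ^ k) / real p ^ k)"
    using p by (intro sum.cong) (auto simp: mu_mult_prime mu_mult_prime_dvd power_mult_distrib)
  also have "\<dots> = - Mq k p (N div p) / real p ^ k"
    unfolding Mq_def by (simp add: sum.If_cases sum_divide_distrib sum_negf Int_def conj_commute)
  finally show ?thesis unfolding Mq_def by simp
qed

lemma Mq_small: "p \<ge> 1 \<Longrightarrow> N < p \<Longrightarrow> Mq k p N = Mp k N"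
  unfolding Mq_def Mp_def by (intro sum.cong) (auto dest: dvd_imp_le)

lemma Mq_bound:
  assumes k: "k \<ge> 2" and p: "prime p" and N: "N \<ge> 1"
  shows "\<bar>Mq k p N - real p ^ k / ((real p ^ k - 1) * zeta_nat k)\<bar> \<le> 8 / sqrt (real N)"
  using N
proof (induction N rule: less_induct)
  case (less N)
  let ?Z = "zeta_nat k" and ?P = "real p ^ k"
  let ?L = "?P / ((?P - 1) * ?Z)"
  have p2: "p \<ge> 2" using p prime_ge_2_nat by blast
  have Z1: "?Z \<ge> 1" using zeta_ge_1[OF k] .
  have Pp: "?P \<ge> real p ^ 2" using k p2 by (intro power_increasing) auto
  have "real p ^ 2 \<ge> 2 ^ 2" using p2 by (intro power_mono) auto
  then have Pge: "?P \<ge> 4" using Pp by simp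
  have nz: "?P - 1 \<noteq> 0" "?Z \<noteq> 0" "?P \<noteq> 0" using Pge Z1 p2 by auto
  have LZ: "?L = 1 / ?Z + ?L / ?P" using nz by (simp add: field_simps)
  have MB: "\<bar>Mp k N - 1 / ?Z\<bar> \<le> 4 / sqrt (real N)" using Mp_bound[OF k less.prems] .
  show ?case
  proof (cases "N < p")
    case True
    have "Mq k p N = Mp k N" using Mq_small True p2 by auto
    have "?L - 1 / ?Z = 1 / ((?P - 1) * ?Z)" using Pge Z1 by (simp add: field_simps)
    also have "\<dots> \<le> 1 / (?P - 1)" using Pge Z1 by (intro divide_left_mono) (auto intro: mult_pos_pos)
    also have "\<dots> \<le> 1 / real p"
    proof -
      have "real p * real p \<ge> 2 * real p" using p2 by (intro mult_right_mono) auto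
      moreover have "real p \<ge> 2" using p2 by simp
      ultimately have "real p ^ 2 \<ge> real p + 1" unfolding power2_eq_square by linarith
      then have "real p \<le> ?P - 1" using Pp by linarith
      then show ?thesis using p2 by (intro divide_left_mono) auto
    qed
    also have "\<dots> \<le> 1 / sqrt (real N)"
    proof -
      have "sqrt (real N) \<le> sqrt (real p)" using True by simp
      also have "\<dots> \<le> real p"
      proof -
        have j1: "1 \<le> sqrt (real p)" using p2 by auto
        have "sqrt (real p) * 1 \<le> sqrt (real p) * sqrt (real p)" using j1 by (intro mult_left_mono) auto
        then show ?thesis by simp
      qed
      finally show ?thesis using less.prems p2 by (intro divide_left_mono) auto
    qed
    finally have "\<bar>?L - 1 / ?Z\<bar> \<le> 1 / sqrt (real N)" using Pge Z1 by (simp add: abs_le_iff field_simps)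
    have "\<bar>Mq k p N - ?L\<bar> \<le> \<bar>Mp k N - 1 / ?Z\<bar> + \<bar>?L - 1 / ?Z\<bar>"
      using \<open>Mq k p N = Mp k N\<close> by linarith
    also have "\<dots> \<le> 4 / sqrt (real N) + 1 / sqrt (real N)" using MB \<open>\<bar>?L - 1 / ?Z\<bar> \<le> 1 / sqrt (real N)\<close> by linarith
    also have "\<dots> \<le> 8 / sqrt (real N)" by (simp add: divide_right_mono)
    finally show ?thesis .
  next
    case False
    let ?q = "N div p"
    have q1: "?q \<ge> 1" using False p2 by (simp add: div_greater_zero_iff Suc_le_eq)
    have qlt: "?q < N" using p2 less.prems by (simp add: div_less_dividend)
    have IH: "\<bar>Mq k p ?q - ?L\<bar> \<le> 8 / sqrt (real ?q)" using less.IH[OF qlt q1] .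
    have rec: "Mq k p N - ?L = (Mp k N - 1 / ?Z) + (Mq k p ?q - ?L) / ?P"
    proof -
      have "(Mq k p ?q - ?L) / ?P = Mq k p ?q / ?P - ?L / ?P" by (simp add: diff_divide_distrib)
      then show ?thesis using Mp_Mq[OF p, of k N] LZ by linarith
    qed
    have "N < 2 * p * ?q"
    proof -
      have e1: "p * ?q + N mod p = N" by (rule mult_div_mod_eq)
      have e2: "N mod p < p" using p2 by simp
      have "p \<le> p * ?q" using q1 by simp
      then show ?thesis using e1 e2 by linarith
    qed
    then have Nq: "real N < 2 * real p * real ?q" by (metis of_nat_less_iff of_nat_mult of_nat_numeral)
    have key: "8 / sqrt (real ?q) / ?P \<le> 4 / sqrt (real N)"
    proof -
      have "4 * real N \<le> 8 * real p * real ?q" using Nq by simp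
      also have "\<dots> \<le> real p ^ 4 * real ?q"
      proof -
        have "8 * real p \<le> real p ^ 4"
        proof -
          have "real p ^ 4 = real p * real p ^ 3" by (simp add: power_Suc[symmetric] del: power_Suc)
          moreover have "real p ^ 3 \<ge> 2 ^ 3" using p2 by (intro power_mono) auto
          ultimately show ?thesis using p2 by simp
        qed
        then show ?thesis using q1 by (intro mult_right_mono) auto
      qed
      also have "\<dots> \<le> ?P ^ 2 * real ?q"
      proof -
        have "real p ^ 4 = (real p ^ 2) ^ 2" by (simp add: power_mult[symmetric])
        also have "\<dots> \<le> ?P ^ 2" using Pp by (intro power_mono) auto
        finally show ?thesis by (intro mult_right_mono) auto
      qed
      finally have "4 * real N \<le> ?P ^ 2 * real ?q" .
      then have "sqrt (4 * real N) \<le> sqrt (?P ^ 2 * real ?q)" by simp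
      then have s: "2 * sqrt (real N) \<le> ?P * sqrt (real ?q)" using Pge by (simp add: real_sqrt_mult)
      have pos: "sqrt (real N) > 0" "sqrt (real ?q) > 0" using less.prems q1 by auto
      define D where "D = ?P * sqrt (real ?q)"
      have Dp: "D > 0" using pos Pge p2 unfolding D_def by (intro mult_pos_pos) auto
      have "8 = (4 / sqrt (real N)) * (2 * sqrt (real N))" using pos by simp
      also have "\<dots> \<le> (4 / sqrt (real N)) * D" using s pos unfolding D_def by (intro mult_left_mono) auto
      finally have "8 / D \<le> 4 / sqrt (real N)" using Dp by (simp add: pos_divide_le_eq)
      then show ?thesis unfolding D_def by (simp add: divide_divide_eq_left mult.commute)
    qed
    have "\<bar>Mq k p N - ?L\<bar> \<le> \<bar>Mp k N - 1 / ?Z\<bar> + \<bar>Mq k p ?q - ?L\<bar> / ?P"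
      unfolding rec using Pge by (simp add: abs_triangle_ineq[THEN order_trans] abs_divide)
    also have "\<dots> \<le> 4 / sqrt (real N) + 8 / sqrt (real ?q) / ?P"
      using MB IH Pge by (intro add_mono divide_right_mono) auto
    also have "\<dots> \<le> 8 / sqrt (real N)" using key by simp
    finally show ?thesis .
  qed
qed



lemma mod_inj_short:
  fixes p d j j' :: nat
  assumes p: "prime p" and nd: "\<not> p dvd d" and eq: "(d*j) mod p = (d*j') mod p"
    and le: "j \<le> j'" and lt: "j' < j + p"
  shows "j = j'"
proof -
  have dj: "d*j \<le> d*j'" using le by simp
  have "p dvd d*j' - d*j" using eq[symmetric] mod_eq_dvd_iff_nat[OF dj] by simp
  then have "p dvd d * (j' - j)" by (simp add: diff_mult_distrib2)
  then have "p dvd (j' - j)" using p nd prime_dvd_mult_iff by blast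
  moreover have "j' - j < p" using lt le by simp
  ultimately have "j' - j = 0"
  proof -
    assume a1: "p dvd (j' - j)" and a2: "j' - j < p"
    show "j' - j = 0"
    proof (rule ccontr)
      assume "j' - j \<noteq> 0"
      then have "p \<le> j' - j" using a1 by (simp add: dvd_imp_le)
      then show False using a2 by simp
    qed
  qed
  then show ?thesis using le by simp
qed

lemma mod_inj_on_short:
  fixes p d b :: nat
  assumes p: "prime p" and nd: "\<not> p dvd d" and len: "m \<le> p"
  shows "inj_on (\<lambda>j. (d*j) mod p) {b+1..b+m}"
proof (rule inj_onI)
  fix x y assume x: "x \<in> {b+1..b+m}" and y: "y \<in> {b+1..b+m}" and e: "(d*x) mod p = (d*y) mod p"
  show "x = y"
  proof (cases "x \<le> y")
    case True then show ?thesis using mod_inj_short[OF p nd e True] x y len by auto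
  next
    case False then show ?thesis using mod_inj_short[OF p nd e[symmetric]] x y len by auto
  qed
qed

lemma count_block:
  fixes p d b a :: nat
  assumes p: "prime p" and nd: "\<not> p dvd d" and a: "a < p"
  shows "card {j\<in>{b+1..b+p}. (d*j) mod p = a} = 1"
proof -
  let ?f = "\<lambda>j. (d*j) mod p"
  have inj: "inj_on ?f {b+1..b+p}" using mod_inj_on_short[OF p nd, of p b] by simp
  have p0: "p > 0" using p prime_gt_0_nat by blast
  have "?f ` {b+1..b+p} \<subseteq> {..<p}" using p0 by auto
  moreover have "card (?f ` {b+1..b+p}) = card {..<p}" using inj by (simp add: card_image)
  ultimately have "?f ` {b+1..b+p} = {..<p}" by (intro card_subset_eq) auto
  then have "a \<in> ?f ` {b+1..b+p}" using a by simp
  then obtain j where j: "j \<in> {b+1..b+p}" "?f j = a" by blast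
  have "{j\<in>{b+1..b+p}. (d*j) mod p = a} = {j}"
  proof (intro equalityI subsetI)
    fix x assume "x \<in> {j\<in>{b+1..b+p}. (d*j) mod p = a}"
    then have x: "x \<in> {b+1..b+p}" "(d*x) mod p = a" by auto
    have "x = j" using inj_onD[OF inj, of x j] x j by simp
    then show "x \<in> {j}" by simp
  next
    fix x assume "x \<in> {j}" then show "x \<in> {j\<in>{b+1..b+p}. (d*j) mod p = a}" using j by simp
  qed
  then show ?thesis by simp
qed

lemma count_residue:
  fixes p d a m :: nat
  assumes p: "prime p" and nd: "\<not> p dvd d" and a: "a < p"
  shows "\<bar>real (card {j\<in>{1..m}. (d*j) mod p = a}) - real m / real p\<bar> \<le> 1"
proof (induction m rule: less_induct)
  case (less m)
  have p0: "p > 0" using p prime_gt_0_nat by blast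
  show ?case
  proof (cases "m < p")
    case True
    have cle: "card {j\<in>{1..m}. (d*j) mod p = a} \<le> Suc 0"
    proof (subst card_le_Suc0_iff_eq, simp, intro ballI)
      have inj: "inj_on (\<lambda>j. (d*j) mod p) {0+1..0+m}" using mod_inj_on_short[OF p nd, of m 0] True by simp
      fix x y assume xy: "x \<in> {j\<in>{1..m}. (d*j) mod p = a}" "y \<in> {j\<in>{1..m}. (d*j) mod p = a}"
      have "x \<in> {0+1..0+m}" "y \<in> {0+1..0+m}" "(d*x) mod p = (d*y) mod p" using xy by auto
      then show "x = y" using inj_onD[OF inj, of x y] by blast
    qed
    have r1: "real m / real p < 1" using True p0 by simp
    have r2: "real m / real p \<ge> 0" by simp
    have r3: "real (card {j\<in>{1..m}. (d*j) mod p = a}) \<le> 1" using cle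
      by (metis One_nat_def of_nat_1 of_nat_le_iff)
    have r4: "real (card {j\<in>{1..m}. (d*j) mod p = a}) \<ge> 0" by simp
    show ?thesis unfolding abs_le_iff using r1 r2 r3 r4 by linarith
  next
    case False
    let ?m = "m - p"
    have mm: "?m + p = m" using False by simp
    have I: "{1..m} = {1..?m} \<union> {?m+1..?m+p}" unfolding mm using False by auto
    have U: "{j\<in>{1..m}. (d*j) mod p = a} = {j\<in>{1..?m}. (d*j) mod p = a} \<union> {j\<in>{?m+1..?m+p}. (d*j) mod p = a}"
      unfolding I by blast
    have "card {j\<in>{1..m}. (d*j) mod p = a} = card {j\<in>{1..?m}. (d*j) mod p = a} + 1"
    proof -
      have "card ({j\<in>{1..?m}. (d*j) mod p = a} \<union> {j\<in>{?m+1..?m+p}. (d*j) mod p = a})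
          = card {j\<in>{1..?m}. (d*j) mod p = a} + card {j\<in>{?m+1..?m+p}. (d*j) mod p = a}"
        by (rule card_Un_disjoint) auto
      then show ?thesis unfolding U using count_block[OF p nd a, of ?m] by simp
    qed
    moreover have "real m / real p = real ?m / real p + 1" using False p0 by (simp add: field_simps)
    moreover have "\<bar>real (card {j\<in>{1..?m}. (d*j) mod p = a}) - real ?m / real p\<bar> \<le> 1"
      using less.IH[of ?m] False p0 by simp
    ultimately show ?thesis by simp
  qed
qed



definition hsum :: "nat \<Rightarrow> nat \<Rightarrow> real" where
  "hsum k i = (\<Sum>d\<in>{d. d dvd i}. mu d / real d ^ (k-1))"

definition Wc :: "nat \<Rightarrow> nat \<Rightarrow> nat \<Rightarrow> real" where
  "Wc k p a = (if a = 0 then (real p ^ (k - 1) - 1) / (real p ^ k - 1) * (1 / zeta_nat k)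
               else real p ^ (k - 1) / (real p ^ k - 1) * (1 / zeta_nat k))"

lemma count_residue_dvd:
  fixes p d a m :: nat
  assumes "p dvd d"
  shows "card {j\<in>{1..m}. (d*j) mod p = a} = (if a = 0 then m else 0)"
proof -
  have "(d*j) mod p = 0" for j using assms by auto
  then have "{j\<in>{1..m}. (d*j) mod p = a} = (if a = 0 then {1..m} else {})" by auto
  then show ?thesis by simp
qed

lemma W_alg0:
  fixes p Q Z :: real
  assumes "p \<noteq> 0" "p * Q - 1 \<noteq> 0" "Z \<noteq> 0"
  shows "(Q - 1) / (p * Q - 1) * (1 / Z) = (p * Q / ((p * Q - 1) * Z)) / p + 1 / Z - p * Q / ((p * Q - 1) * Z)"
proof -
  define D where "D = (p * Q - 1) * Z"
  have D: "D \<noteq> 0" using assms unfolding D_def by simp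
  have e1: "(p * Q / D) / p = Q / D" using assms by simp
  have e2: "1 / Z = (p * Q - 1) / D" using assms unfolding D_def by simp
  have "(p * Q / D) / p + 1 / Z - p * Q / D = (Q + (p * Q - 1) - p * Q) / D"
    unfolding e1 e2 by (simp add: add_divide_distrib diff_divide_distrib)
  also have "\<dots> = (Q - 1) / D" by simp
  finally show ?thesis unfolding D_def by simp
qed
lemma W_alg1:
  fixes p Q Z :: real
  assumes "p \<noteq> 0" "p * Q - 1 \<noteq> 0" "Z \<noteq> 0"
  shows "Q / (p * Q - 1) * (1 / Z) = (p * Q / ((p * Q - 1) * Z)) / p"
  using assms by (simp add: field_simps)

lemma main_term:
  assumes k: "k \<ge> 2" and p: "prime p" and a: "a < p" and n: "n \<ge> 1"
  shows "\<bar>(\<Sum>i\<in>{i\<in>{1..n}. i mod p = a}. hsum k i) - real n * Wc k p a\<bar>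
         \<le> 2 * (\<Sum>d\<in>{1..n}. 1 / real d) + 20 * sqrt (real n)"
proof -
  let ?Z = "zeta_nat k" and ?P = "real p ^ k"
  define Lv where "Lv = ?P / ((?P - 1) * ?Z)"
  define w where "w d = (if p dvd d then (if a = 0 then 1 else 0) else 1 / real p)" for d
  define c where "c d = real (card {j\<in>{1..n div d}. (d*j) mod p = a})" for d
  have p2: "p \<ge> 2" using p prime_ge_2_nat by blast
  have S: "(\<Sum>i\<in>{i\<in>{1..n}. i mod p = a}. hsum k i) = (\<Sum>d\<in>{1..n}. mu d / real d ^ (k-1) * c d)"
    unfolding hsum_def c_def
    by (subst divisor_sum_swap) (simp add: mult.commute)
  have cerr: "\<bar>c d - real n / real d * w d\<bar> \<le> 2" if d: "d \<in> {1..n}" for d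
  proof -
    have dd: "\<bar>real (n div d) - real n / real d\<bar> \<le> 1"
    proof -
      have e1: "d * (n div d) + n mod d = n" by (rule mult_div_mod_eq)
      have e2: "n mod d < d" using d by simp
      have "real n = real d * real (n div d) + real (n mod d)" using e1 by (metis of_nat_add of_nat_mult)
      then have "real n / real d = real (n div d) + real (n mod d) / real d" using d by (simp add: field_simps)
      moreover have "real (n mod d) / real d \<le> 1" using e2 d by simp
      moreover have "real (n mod d) / real d \<ge> 0" by simp
      ultimately show ?thesis by (simp add: abs_le_iff)
    qed
    show ?thesis
    proof (cases "p dvd d")
      case True
      then have "c d = (if a = 0 then real (n div d) else 0)" unfolding c_def using count_residue_dvd[OF True] by simp
      then show ?thesis using True dd unfolding w_def by auto
    next
      case False
      have c1: "\<bar>c d - real (n div d) / real p\<bar> \<le> 1" unfolding c_def using count_residue[OF p False a] .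
      have "real (n div d) / real p - real n / real d / real p = (real (n div d) - real n / real d) / real p"
        by (simp only: diff_divide_distrib)
      then have "\<bar>real (n div d) / real p - real n / real d / real p\<bar> = \<bar>real (n div d) - real n / real d\<bar> / real p"
        by (simp only: abs_divide abs_of_nat)
      also have "\<dots> \<le> 1 / real p" using dd p2 by (intro divide_right_mono) auto
      also have "\<dots> \<le> 1" using p2 by simp
      finally have c2: "\<bar>real (n div d) / real p - real n / real d / real p\<bar> \<le> 1" .
      have "w d = 1 / real p" using False unfolding w_def by simp
      then have "real n / real d * w d = real n / real d / real p" by simp
      then show ?thesis using c1 c2 by linarith
    qed
  qed
  define T where "T = (\<Sum>d\<in>{1..n}. mu d / real d ^ (k-1) * (real n / real d * w d))"
  have ST: "\<bar>(\<Sum>d\<in>{1..n}. mu d / real d ^ (k-1) * c d) - T\<bar> \<le> 2 * (\<Sum>d\<in>{1..n}. 1 / real d)"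
  proof -
    have "\<bar>(\<Sum>d\<in>{1..n}. mu d / real d ^ (k-1) * c d) - T\<bar>
        = \<bar>\<Sum>d\<in>{1..n}. mu d / real d ^ (k-1) * (c d - real n / real d * w d)\<bar>"
      unfolding T_def by (simp add: sum_subtractf right_diff_distrib)
    also have "\<dots> \<le> (\<Sum>d\<in>{1..n}. \<bar>mu d / real d ^ (k-1) * (c d - real n / real d * w d)\<bar>)"
      by (rule sum_abs)
    also have "\<dots> \<le> (\<Sum>d\<in>{1..n}. 2 * (1 / real d))"
    proof (rule sum_mono)
      fix d assume d: "d \<in> {1..n}"
      have dk: "real d ^ 1 \<le> real d ^ (k-1)" using d k by (intro power_increasing) auto
      have "\<bar>mu d / real d ^ (k-1) * (c d - real n / real d * w d)\<bar>
          = \<bar>mu d\<bar> * \<bar>c d - real n / real d * w d\<bar> / real d ^ (k-1)"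
        by (simp add: abs_mult abs_divide)
      also have "\<dots> \<le> 1 * 2 / real d ^ (k-1)" using cerr[OF d] mu_abs_le[of d]
        by (intro divide_right_mono mult_mono) auto
      also have "\<dots> \<le> 2 / real d"
      proof -
        have "real d \<le> real d ^ (k-1)" using dk by simp
        then show ?thesis using d by (simp add: frac_le)
      qed
      finally show "\<bar>mu d / real d ^ (k-1) * (c d - real n / real d * w d)\<bar> \<le> 2 * (1 / real d)" by simp
    qed
    also have "\<dots> = 2 * (\<Sum>d\<in>{1..n}. 1 / real d)" by (simp add: sum_distrib_left)
    finally show ?thesis .
  qed
  have Tform: "T = real n * (Mq k p n / real p + (if a = 0 then Mp k n - Mq k p n else 0))"
  proof -
    have "T = real n * (\<Sum>d\<in>{1..n}. mu d / real d ^ k * w d)"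
      unfolding T_def sum_distrib_left
    proof (rule sum.cong[OF refl])
      fix d assume d: "d \<in> {1..n}"
      have "real d ^ k = real d ^ (k-1) * real d" using k by (metis Suc_diff_1 less_le_trans numeral_2_eq_2 power_Suc2 zero_less_Suc)
      then show "mu d / real d ^ (k-1) * (real n / real d * w d) = real n * (mu d / real d ^ k * w d)"
        using d by (simp add: field_simps)
    qed
    also have "(\<Sum>d\<in>{1..n}. mu d / real d ^ k * w d)
        = (\<Sum>d\<in>{d\<in>{1..n}. \<not> p dvd d}. mu d / real d ^ k * w d) + (\<Sum>d\<in>{d\<in>{1..n}. p dvd d}. mu d / real d ^ k * w d)"
    proof -
      have U: "{1..n} = {d\<in>{1..n}. \<not> p dvd d} \<union> {d\<in>{1..n}. p dvd d}" by auto
      show ?thesis by (subst U, rule sum.union_disjoint) auto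
    qed
    also have "(\<Sum>d\<in>{d\<in>{1..n}. \<not> p dvd d}. mu d / real d ^ k * w d) = Mq k p n / real p"
      unfolding Mq_def w_def by (simp add: sum_divide_distrib)
    also have "(\<Sum>d\<in>{d\<in>{1..n}. p dvd d}. mu d / real d ^ k * w d) = (if a = 0 then Mp k n - Mq k p n else 0)"
    proof -
      have U: "{1..n} = {d\<in>{1..n}. \<not> p dvd d} \<union> {d\<in>{1..n}. p dvd d}" by auto
      have "Mp k n = Mq k p n + (\<Sum>d\<in>{d\<in>{1..n}. p dvd d}. mu d / real d ^ k)"
        unfolding Mp_def Mq_def by (subst U, rule sum.union_disjoint) auto
      then show ?thesis unfolding w_def by simp
    qed
    finally show ?thesis .
  qed
  have nz: "?P - 1 \<noteq> 0" "?Z \<noteq> 0" "real p \<noteq> 0"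
  proof -
    have "?P \<ge> real p ^ 1" using p2 k by (intro power_increasing) auto
    moreover have "real p ^ 1 \<ge> 2" using p2 by simp
    ultimately show "?P - 1 \<noteq> 0" by linarith
    show "?Z \<noteq> 0" using zeta_ge_1[OF k] by simp
    show "real p \<noteq> 0" using p2 by simp
  qed
  have Pk: "?P = real p * real p ^ (k-1)" using k by (metis Suc_diff_1 less_le_trans numeral_2_eq_2 power_Suc zero_less_Suc)
  have MB: "\<bar>Mp k n - 1 / ?Z\<bar> \<le> 4 / sqrt (real n)" using Mp_bound[OF k n] .
  have QB: "\<bar>Mq k p n - Lv\<bar> \<le> 8 / sqrt (real n)" using Mq_bound[OF k p n] unfolding Lv_def .
  have sq: "real n / sqrt (real n) = sqrt (real n)" using n by (metis real_div_sqrt of_nat_0_le_iff)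
  have TW: "\<bar>T - real n * Wc k p a\<bar> \<le> 20 * sqrt (real n)"
  proof (cases "a = 0")
    case True
    have W: "Wc k p a = Lv / real p + 1 / ?Z - Lv"
      unfolding Wc_def Lv_def using True nz Pk W_alg0[of "real p" "real p ^ (k-1)" ?Z] by simp
    have "T - real n * Wc k p a = real n * ((Mq k p n - Lv) / real p + (Mp k n - 1 / ?Z) - (Mq k p n - Lv))"
      unfolding Tform W using True nz by (simp add: algebra_simps diff_divide_distrib)
    also have "\<bar>\<dots>\<bar> \<le> real n * (8 / sqrt (real n) + 4 / sqrt (real n) + 8 / sqrt (real n))"
    proof -
      have "\<bar>(Mq k p n - Lv) / real p\<bar> \<le> \<bar>Mq k p n - Lv\<bar>" using p2 mult_left_mono[of 1 "real p" "\<bar>Mq k p n - Lv\<bar>"] by (simp add: abs_divide divide_le_eq)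
      then have "\<bar>(Mq k p n - Lv) / real p + (Mp k n - 1 / ?Z) - (Mq k p n - Lv)\<bar> \<le> 8 / sqrt (real n) + 4 / sqrt (real n) + 8 / sqrt (real n)"
        using MB QB by linarith
      then show ?thesis unfolding abs_mult abs_of_nat by (rule mult_left_mono) simp
    qed
    also have "\<dots> = 20 * (real n / sqrt (real n))" by (simp add: field_simps)
    also have "\<dots> = 20 * sqrt (real n)" using sq by simp
    finally show ?thesis .
  next
    case False
    have W: "Wc k p a = Lv / real p"
      unfolding Wc_def Lv_def using False nz Pk W_alg1[of "real p" "real p ^ (k-1)" ?Z] by simp
    have "T - real n * Wc k p a = real n * ((Mq k p n - Lv) / real p)"
      unfolding Tform W using False nz by (simp add: algebra_simps diff_divide_distrib)
    also have "\<bar>\<dots>\<bar> \<le> real n * (8 / sqrt (real n))"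
    proof -
      have "\<bar>(Mq k p n - Lv) / real p\<bar> \<le> \<bar>Mq k p n - Lv\<bar>" using p2 mult_left_mono[of 1 "real p" "\<bar>Mq k p n - Lv\<bar>"] by (simp add: abs_divide divide_le_eq)
      then have "\<bar>(Mq k p n - Lv) / real p\<bar> \<le> 8 / sqrt (real n)" using QB by linarith
      then show ?thesis unfolding abs_mult abs_of_nat by (rule mult_left_mono) simp
    qed
    also have "\<dots> = 8 * (real n / sqrt (real n))" by (simp add: field_simps)
    also have "\<dots> \<le> 20 * sqrt (real n)" using sq by simp
    finally show ?thesis .
  qed
  show ?thesis using S ST TW by linarith
qed


lemma step_pmf:
  assumes "valid_type k \<alpha>"
  shows "pmf (step_index_pmf \<alpha>) j = (if j < k then \<alpha> ! j else 0)"
    and "set_pmf (step_index_pmf \<alpha>) \<subseteq> {..<k}"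
proof -
  let ?f = "\<lambda>j. if j < length \<alpha> then \<alpha> ! j else 0"
  have len: "length \<alpha> = k" and pos: "\<And>x. x \<in> set \<alpha> \<Longrightarrow> 0 < x" and s1: "sum_list \<alpha> = 1"
    using assms unfolding valid_type_def by auto
  have nn: "0 \<le> ?f j" for j using pos by (auto simp: nth_mem less_imp_le)
  have "(\<integral>\<^sup>+x. ennreal (?f x) \<partial>count_space UNIV) = (\<Sum>x\<in>{..<length \<alpha>}. ennreal (?f x))"
    by (rule nn_integral_count_space') auto
  also have "\<dots> = ennreal (\<Sum>x\<in>{..<length \<alpha>}. ?f x)"
    by (rule sum_ennreal) (use pos in \<open>auto simp: nth_mem less_imp_le\<close>)
  also have "(\<Sum>x\<in>{..<length \<alpha>}. ?f x) = sum_list \<alpha>"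
    by (simp add: sum_list_sum_nth atLeast0LessThan)
  finally have int1: "(\<integral>\<^sup>+x. ennreal (?f x) \<partial>count_space UNIV) = 1" using s1 by simp
  have pm: "pmf (step_index_pmf \<alpha>) j = ?f j" for j
    unfolding step_index_pmf_def by (rule pmf_embed_pmf[OF nn int1])
  then show "pmf (step_index_pmf \<alpha>) j = (if j < k then \<alpha> ! j else 0)" using len by simp
  show "set_pmf (step_index_pmf \<alpha>) \<subseteq> {..<k}"
  proof
    fix j assume "j \<in> set_pmf (step_index_pmf \<alpha>)"
    then have "pmf (step_index_pmf \<alpha>) j \<noteq> 0" by (simp add: set_pmf_eq)
    then show "j \<in> {..<k}" using pm len by (auto split: if_splits)
  qed
qed

lemma step_expectation:
  fixes g :: "nat \<Rightarrow> 'b::{banach, second_countable_topology}"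
  assumes "valid_type k \<alpha>"
  shows "measure_pmf.expectation (step_index_pmf \<alpha>) g = (\<Sum>j<k. (\<alpha> ! j) *\<^sub>R g j)"
proof -
  have "measure_pmf.expectation (step_index_pmf \<alpha>) g = (\<Sum>j\<in>{..<k}. pmf (step_index_pmf \<alpha>) j *\<^sub>R g j)"
    using step_pmf(2)[OF assms] by (intro integral_measure_pmf) auto
  then show ?thesis using step_pmf(1)[OF assms] by simp
qed

lemma sum_list_update_add:
  fixes xs :: "'a::comm_monoid_add list"
  shows "j < length xs \<Longrightarrow> sum_list (xs[j := xs ! j + c]) = sum_list xs + c"
proof (induction xs arbitrary: j)
  case Nil then show ?case by simp
next
  case (Cons x xs)
  then show ?case by (cases j) (auto simp: algebra_simps)
qed

definition Wset :: "nat \<Rightarrow> nat \<Rightarrow> int list set" where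
  "Wset k i = {p. length p = k \<and> set p \<subseteq> {0..int i} \<and> sum_list p = int i}"

lemma finite_Wset: "finite (Wset k i)"
proof -
  have "Wset k i \<subseteq> {p. set p \<subseteq> {0..int i} \<and> length p = k}" unfolding Wset_def by auto
  moreover have "finite {p. set p \<subseteq> {0..int i} \<and> length p = k}"
    by (rule finite_lists_length_eq) simp
  ultimately show ?thesis by (rule finite_subset)
qed

lemma Wset_step:
  assumes "p \<in> Wset k i" "j < k"
  shows "p[j := p ! j + 1] \<in> Wset k (Suc i)"
proof -
  have len: "length p = k" and st: "set p \<subseteq> {0..int i}" and sm: "sum_list p = int i"
    using assms unfolding Wset_def by auto
  have pj: "p ! j \<in> {0..int i}" using st len assms(2) nth_mem by blast
  have "set (p[j := p ! j + 1]) \<subseteq> insert (p ! j + 1) (set p)" by (rule set_update_subset_insert)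
  also have "\<dots> \<subseteq> {0..int (Suc i)}" using st pj by auto
  finally have "set (p[j := p ! j + 1]) \<subseteq> {0..int (Suc i)}" .
  moreover have "sum_list (p[j := p ! j + 1]) = int (Suc i)"
    using sum_list_update_add[of j p 1] len assms(2) sm by simp
  ultimately show ?thesis using len unfolding Wset_def by simp
qed

locale walk_ctx =
  fixes k :: nat and \<sigma> :: "nat \<Rightarrow> real list"
  assumes vt: "\<And>j. j \<ge> 1 \<Longrightarrow> valid_type k (\<sigma> j)"
begin

abbreviation W where "W i \<equiv> walk_pmf k \<sigma> i"

lemma set_walk: "set_pmf (W i) \<subseteq> Wset k i"
proof (induction i)
  case 0 then show ?case by (auto simp: Wset_def set_replicate_conv_if sum_list_replicate)
next
  case (Suc i)
  have v: "valid_type k (\<sigma> (Suc i))" using vt by simp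
  show ?case
  proof
    fix q assume "q \<in> set_pmf (W (Suc i))"
    then obtain p j where p: "p \<in> set_pmf (W i)" and j: "j \<in> set_pmf (step_index_pmf (\<sigma> (Suc i)))"
      and q: "q = p[j := p ! j + 1]" by auto
    have "j < k" using step_pmf(2)[OF v] j by auto
    then show "q \<in> Wset k (Suc i)" using Wset_step Suc p q by blast
  qed
qed

lemma expectation_walk:
  fixes f :: "int list \<Rightarrow> 'b::{banach, second_countable_topology}"
  shows "measure_pmf.expectation (W i) f = (\<Sum>p\<in>Wset k i. pmf (W i) p *\<^sub>R f p)"
  using set_walk finite_Wset by (intro integral_measure_pmf) auto

lemma expectation_walk_Suc:
  fixes h :: "int list \<Rightarrow> 'b::{banach, second_countable_topology}"
  shows "measure_pmf.expectation (W (Suc i)) h =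
     (\<Sum>p\<in>Wset k i. pmf (W i) p *\<^sub>R (\<Sum>j<k. (\<sigma> (Suc i) ! j) *\<^sub>R h (p[j := p ! j + 1])))"
proof -
  have v: "valid_type k (\<sigma> (Suc i))" using vt by simp
  have "measure_pmf.expectation (W (Suc i)) h =
     (\<Sum>p\<in>Wset k i. pmf (W i) p *\<^sub>R measure_pmf.expectation (map_pmf (\<lambda>j. p[j := p ! j + 1]) (step_index_pmf (\<sigma> (Suc i)))) h)"
    unfolding walk_pmf.simps
    by (rule pmf_expectation_bind) (use finite_Wset set_walk step_pmf(2)[OF v] in \<open>auto intro: finite_subset\<close>)
  also have "\<dots> = (\<Sum>p\<in>Wset k i. pmf (W i) p *\<^sub>R (\<Sum>j<k. (\<sigma> (Suc i) ! j) *\<^sub>R h (p[j := p ! j + 1])))"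
    by (simp add: step_expectation[OF v])
  finally show ?thesis .
qed

end


lemma dvd_sum_list_int:
  fixes g :: int
  shows "(\<And>x. x \<in> set p \<Longrightarrow> g dvd x) \<Longrightarrow> g dvd sum_list p"
  by (induction p) auto

lemma visible_decomp:
  assumes p: "p \<in> Wset k i" and i: "i \<ge> 1"
  shows "(if visible p then 1 else 0 :: real) = (\<Sum>d\<in>{d. d dvd i}. mu d * (if \<forall>x\<in>set p. int d dvd x then 1 else 0))"
proof -
  define g where "g = nat (Gcd (set p))"
  have Gnn: "Gcd (set p) \<ge> 0" by simp
  then have gG: "int g = Gcd (set p)" unfolding g_def by simp
  have sm: "sum_list p = int i" using p unfolding Wset_def by auto
  have dv_iff: "(\<forall>x\<in>set p. int d dvd x) \<longleftrightarrow> d dvd g" for d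
  proof -
    have "(\<forall>x\<in>set p. int d dvd x) \<longleftrightarrow> int d dvd Gcd (set p)" by (simp add: dvd_Gcd_iff)
    also have "\<dots> \<longleftrightarrow> int d dvd int g" using gG by simp
    also have "\<dots> \<longleftrightarrow> d dvd g" by simp
    finally show ?thesis .
  qed
  have gi: "g dvd i"
  proof -
    have "Gcd (set p) dvd sum_list p" by (rule dvd_sum_list_int) simp
    then have "int g dvd int i" using gG sm by simp
    then show ?thesis by simp
  qed
  have g0: "g \<noteq> 0"
  proof
    assume "g = 0"
    then have "Gcd (set p) = 0" using gG by simp
    then have "set p \<subseteq> {0}" by (simp add: Gcd_0_iff)
    then have "sum_list p = 0" by (induction p) auto
    then show False using sm i by simp
  qed
  have vis: "visible p \<longleftrightarrow> g = 1" unfolding visible_def using gG by auto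
  have "(\<Sum>d\<in>{d. d dvd i}. mu d * (if \<forall>x\<in>set p. int d dvd x then 1 else 0))
      = (\<Sum>d\<in>{d. d dvd i}. if d dvd g then mu d else 0)"
    by (intro sum.cong) (auto simp: dv_iff)
  also have "\<dots> = (\<Sum>d\<in>{d\<in>{d. d dvd i}. d dvd g}. mu d)"
  proof -
    have fin: "finite {d. d dvd i}" using i by simp
    show ?thesis by (rule sum.inter_filter[OF fin, symmetric])
  qed
  also have "{d\<in>{d. d dvd i}. d dvd g} = {d. d dvd g}" using gi by (auto intro: dvd_trans)
  also have "(\<Sum>d\<in>{d. d dvd g}. mu d) = (if g = 1 then 1 else 0)" using g0 by (intro mu_sum_divisors) simp
  finally show ?thesis using vis by simp
qed

context walk_ctx begin

definition Pd :: "nat \<Rightarrow> nat \<Rightarrow> real" where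
  "Pd i d = measure_pmf.expectation (W i) (\<lambda>p. if \<forall>x\<in>set p. int d dvd x then 1 else 0)"

lemma EXvis_decomp:
  assumes i: "i \<ge> 1"
  shows "EXvis k \<sigma> i = (\<Sum>d\<in>{d. d dvd i}. mu d * Pd i d)"
proof -
  have "EXvis k \<sigma> i = (\<Sum>p\<in>Wset k i. pmf (W i) p * (if visible p then 1 else 0))"
    unfolding EXvis_def by (subst expectation_walk) simp
  also have "\<dots> = (\<Sum>p\<in>Wset k i. pmf (W i) p * (\<Sum>d\<in>{d. d dvd i}. mu d * (if \<forall>x\<in>set p. int d dvd x then 1 else 0)))"
    by (intro sum.cong refl) (simp add: visible_decomp[OF _ i])
  also have "\<dots> = (\<Sum>d\<in>{d. d dvd i}. mu d * (\<Sum>p\<in>Wset k i. pmf (W i) p * (if \<forall>x\<in>set p. int d dvd x then 1 else 0)))"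
    by (simp add: sum_distrib_left sum.swap[of _ "Wset k i"] algebra_simps)
  also have "\<dots> = (\<Sum>d\<in>{d. d dvd i}. mu d * Pd i d)"
    unfolding Pd_def by (subst expectation_walk) simp
  finally show ?thesis .
qed

end


definition ee :: "real \<Rightarrow> complex" where "ee x = cis (2 * pi * x)"

lemma ee_add: "ee (x + y) = ee x * ee y"
  unfolding ee_def by (simp add: cis_mult distrib_left)

lemma ee_0 [simp]: "ee 0 = 1" by (simp add: ee_def)

lemma norm_ee [simp]: "norm (ee x) = 1" by (simp add: ee_def)

lemma ee_int: "ee (real_of_int n) = 1"
  unfolding ee_def by (rule cis_multiple_2pi) simp

lemma ee_power: "ee x ^ n = ee (real n * x)"
  unfolding ee_def by (simp add: Complex.DeMoivre algebra_simps)

lemma ee_sum: "ee (\<Sum>i\<in>A. f i) = (\<Prod>i\<in>A. ee (f i))"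
proof (induction A rule: infinite_finite_induct)
  case (insert x F) then show ?case by (simp add: ee_add)
qed auto

lemma ee_eq_1: "ee x = 1 \<Longrightarrow> \<exists>n::int. x = real_of_int n"
proof -
  assume "ee x = 1"
  then have "cos (2 * pi * x) = 1" unfolding ee_def by (metis cis.sel(1) one_complex.sel(1))
  then obtain n :: int where "2 * pi * x = real_of_int n * 2 * pi" using cos_one_2pi_int by blast
  then have "x = real_of_int n" by simp
  then show ?thesis by blast
qed

lemma root_sum:
  fixes x :: int and d :: nat
  assumes d: "d \<ge> 1"
  shows "(\<Sum>s<d. ee (real s * real_of_int x / real d)) = (if int d dvd x then of_nat d else 0)"
proof -
  let ?w = "ee (real_of_int x / real d)"
  have pw: "ee (real s * real_of_int x / real d) = ?w ^ s" for s by (simp add: ee_power)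
  show ?thesis
  proof (cases "int d dvd x")
    case True
    then obtain c where c: "x = int d * c" by blast
    have "?w = 1" using d c ee_int[of c] by simp
    then show ?thesis using True by (simp add: pw)
  next
    case False
    have w1: "?w \<noteq> 1"
    proof
      assume "?w = 1"
      then obtain n :: int where n: "real_of_int x / real d = real_of_int n" using ee_eq_1 by blast
      then have "real_of_int x = real_of_int (int d * n)" using d by (simp add: field_simps)
      then have "x = int d * n" by linarith
      then show False using False by simp
    qed
    have wd: "?w ^ d = 1" using d by (simp add: ee_power ee_int)
    show ?thesis using False w1 wd by (simp add: pw sum_gp_strict)
  qed
qed

definition Tset :: "nat \<Rightarrow> nat \<Rightarrow> nat list set" where
  "Tset k d = {t. length t = k \<and> (\<forall>x\<in>set t. x < d)}"

lemma Tset_Suc: "Tset (Suc k) d = (\<lambda>(s, t). s # t) ` ({..<d} \<times> Tset k d)"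
  unfolding Tset_def by (auto simp: image_iff length_Suc_conv split: prod.splits) 

lemma finite_Tset: "finite (Tset k d)"
proof (induction k)
  case 0 then show ?case by (simp add: Tset_def)
next
  case (Suc k) then show ?case by (simp add: Tset_Suc)
qed

lemma prod_sum_lists:
  fixes g :: "nat \<Rightarrow> nat \<Rightarrow> 'a::comm_ring_1"
  shows "(\<Prod>m<k. \<Sum>s<d. g m s) = (\<Sum>t\<in>Tset k d. \<Prod>m<k. g m (t ! m))"
proof (induction k arbitrary: g)
  case 0
  have "Tset 0 d = {[]}" by (auto simp: Tset_def)
  then show ?case by simp
next
  case (Suc k)
  have "(\<Prod>m<Suc k. \<Sum>s<d. g m s) = (\<Sum>s<d. g 0 s) * (\<Prod>m<k. \<Sum>s<d. g (Suc m) s)"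
    by (rule prod.lessThan_Suc_shift)
  also have "\<dots> = (\<Sum>s<d. g 0 s) * (\<Sum>t\<in>Tset k d. \<Prod>m<k. g (Suc m) (t ! m))"
    using Suc[of "\<lambda>m. g (Suc m)"] by simp
  also have "\<dots> = (\<Sum>(s, t)\<in>{..<d} \<times> Tset k d. g 0 s * (\<Prod>m<k. g (Suc m) (t ! m)))"
    by (simp add: sum_product sum.cartesian_product)
  also have "\<dots> = (\<Sum>(s, t)\<in>{..<d} \<times> Tset k d. \<Prod>m<Suc k. g m ((s # t) ! m))"
    by (intro sum.cong refl) (auto simp del: prod.lessThan_Suc simp add: prod.lessThan_Suc_shift)
  also have "\<dots> = (\<Sum>t\<in>Tset (Suc k) d. \<Prod>m<Suc k. g m (t ! m))"
    unfolding Tset_Suc by (subst sum.reindex) (auto simp: inj_on_def case_prod_beta)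
  finally show ?case .
qed

definition ip :: "nat \<Rightarrow> nat list \<Rightarrow> int list \<Rightarrow> real" where
  "ip k t p = (\<Sum>m<k. real (t ! m) * real_of_int (p ! m))"

lemma ip_update:
  assumes "length p = k" "j < k"
  shows "ip k t (p[j := p ! j + 1]) = ip k t p + real (t ! j)"
proof -
  have "ip k t (p[j := p ! j + 1]) = (\<Sum>m<k. real (t ! m) * real_of_int (p ! m) + (if m = j then real (t ! j) else 0))"
    unfolding ip_def using assms by (intro sum.cong refl) (auto simp: nth_list_update algebra_simps)
  also have "\<dots> = ip k t p + real (t ! j)" unfolding ip_def using assms by (simp add: sum.distrib)
  finally show ?thesis .
qed

lemma indicator_fourier:
  assumes d: "d \<ge> 1" and len: "length p = k"
  shows "(if \<forall>x\<in>set p. int d dvd x then 1 else 0 :: complex)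
       = (\<Sum>t\<in>Tset k d. ee (ip k t p / real d)) / of_nat d ^ k"
proof -
  have "(if \<forall>x\<in>set p. int d dvd x then 1 else 0 :: complex) = (\<Prod>m<k. if int d dvd p ! m then 1 else 0)"
  proof (cases "\<forall>x\<in>set p. int d dvd x")
    case True
    then have "\<forall>m<k. int d dvd p ! m" using len by (auto simp: nth_mem)
    then show ?thesis using True by simp
  next
    case False
    then obtain m where "m < k" "\<not> int d dvd p ! m" using len by (auto simp: in_set_conv_nth)
    then have z: "(\<Prod>m<k. if int d dvd p ! m then 1 else 0 :: complex) = 0"
      by (subst prod_zero_iff) auto
    show ?thesis by (subst if_not_P[OF False]) (rule z[symmetric])
  qed
  also have "\<dots> = (\<Prod>m<k. (\<Sum>s<d. ee (real s * real_of_int (p ! m) / real d)) / of_nat d)"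
    using d by (intro prod.cong refl) (simp add: root_sum)
  also have "\<dots> = (\<Prod>m<k. \<Sum>s<d. ee (real s * real_of_int (p ! m) / real d)) / of_nat d ^ k"
    by (simp add: prod_dividef)
  also have "(\<Prod>m<k. \<Sum>s<d. ee (real s * real_of_int (p ! m) / real d))
      = (\<Sum>t\<in>Tset k d. \<Prod>m<k. ee (real (t ! m) * real_of_int (p ! m) / real d))"
    by (rule prod_sum_lists)
  also have "\<dots> = (\<Sum>t\<in>Tset k d. ee (ip k t p / real d))"
    unfolding ip_def by (intro sum.cong refl) (simp add: ee_sum[symmetric] sum_divide_distrib)
  finally show ?thesis .
qed


context walk_ctx begin

definition phi :: "real list \<Rightarrow> nat \<Rightarrow> nat list \<Rightarrow> complex" where
  "phi \<alpha> d t = (\<Sum>m<k. (\<alpha> ! m) *\<^sub>R ee (real (t ! m) / real d))"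

definition F :: "nat \<Rightarrow> nat \<Rightarrow> nat list \<Rightarrow> complex" where
  "F i d t = measure_pmf.expectation (W i) (\<lambda>p. ee (ip k t p / real d))"

lemma F_Suc: "F (Suc i) d t = F i d t * phi (\<sigma> (Suc i)) d t"
proof -
  have "F (Suc i) d t = (\<Sum>p\<in>Wset k i. pmf (W i) p *\<^sub>R (\<Sum>j<k. (\<sigma> (Suc i) ! j) *\<^sub>R ee (ip k t (p[j := p ! j + 1]) / real d)))"
    unfolding F_def by (rule expectation_walk_Suc)
  also have "\<dots> = (\<Sum>p\<in>Wset k i. pmf (W i) p *\<^sub>R (ee (ip k t p / real d) * phi (\<sigma> (Suc i)) d t))"
  proof (intro sum.cong refl)
    fix p assume p: "p \<in> Wset k i"
    then have len: "length p = k" unfolding Wset_def by simp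
    have "(\<Sum>j<k. (\<sigma> (Suc i) ! j) *\<^sub>R ee (ip k t (p[j := p ! j + 1]) / real d))
        = (\<Sum>j<k. (\<sigma> (Suc i) ! j) *\<^sub>R (ee (ip k t p / real d) * ee (real (t ! j) / real d)))"
      using len by (intro sum.cong refl) (simp add: ip_update add_divide_distrib ee_add)
    also have "\<dots> = ee (ip k t p / real d) * phi (\<sigma> (Suc i)) d t"
      unfolding phi_def by (simp add: sum_distrib_left)
    finally show "pmf (W i) p *\<^sub>R (\<Sum>j<k. (\<sigma> (Suc i) ! j) *\<^sub>R ee (ip k t (p[j := p ! j + 1]) / real d))
        = pmf (W i) p *\<^sub>R (ee (ip k t p / real d) * phi (\<sigma> (Suc i)) d t)" by simp
  qed
  also have "\<dots> = F i d t * phi (\<sigma> (Suc i)) d t"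
    unfolding F_def expectation_walk by (simp add: sum_distrib_right)
  finally show ?thesis .
qed

lemma F_0: "F 0 d t = 1"
proof -
  have "ip k t (replicate k 0) = 0" unfolding ip_def by simp
  then show ?thesis unfolding F_def by simp
qed

lemma F_prod: "F i d t = (\<Prod>j\<in>{1..i}. phi (\<sigma> j) d t)"
proof (induction i)
  case 0 then show ?case by (simp add: F_0)
next
  case (Suc i)
  have "{1..Suc i} = insert (Suc i) {1..i}" by auto
  then show ?case using Suc by (simp add: F_Suc mult.commute)
qed

lemma Pd_fourier:
  assumes d: "d \<ge> 1"
  shows "complex_of_real (Pd i d) = (\<Sum>t\<in>Tset k d. F i d t) / of_nat d ^ k"
proof -
  have "complex_of_real (Pd i d) = (\<Sum>p\<in>Wset k i. pmf (W i) p *\<^sub>R (if \<forall>x\<in>set p. int d dvd x then 1 else 0 :: complex))"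
    unfolding Pd_def expectation_walk by (simp add: of_real_sum scaleR_conv_of_real) (intro sum.cong refl, simp)
  also have "\<dots> = (\<Sum>p\<in>Wset k i. pmf (W i) p *\<^sub>R ((\<Sum>t\<in>Tset k d. ee (ip k t p / real d)) / of_nat d ^ k))"
    by (intro sum.cong refl) (auto simp: Wset_def indicator_fourier[OF d])
  also have "\<dots> = (\<Sum>p\<in>Wset k i. \<Sum>t\<in>Tset k d. complex_of_real (pmf (W i) p) * ee (ip k t p / real d) / of_nat d ^ k)"
    by (simp add: scaleR_conv_of_real sum_divide_distrib sum_distrib_left)
  also have "\<dots> = (\<Sum>t\<in>Tset k d. \<Sum>p\<in>Wset k i. complex_of_real (pmf (W i) p) * ee (ip k t p / real d) / of_nat d ^ k)"
    by (rule sum.swap)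
  also have "\<dots> = (\<Sum>t\<in>Tset k d. F i d t) / of_nat d ^ k"
    unfolding F_def expectation_walk by (simp add: scaleR_conv_of_real sum_divide_distrib)
  finally show ?thesis .
qed

end


lemma quad_ident:
  fixes w x y :: "nat \<Rightarrow> real"
  assumes u: "\<And>m. x m ^ 2 + y m ^ 2 = 1" and s: "(\<Sum>m<k. w m) = 1"
  shows "(\<Sum>m<k. \<Sum>l<k. w m * w l * ((x m - x l)^2 + (y m - y l)^2))
       = 2 - 2 * ((\<Sum>m<k. w m * x m)^2 + (\<Sum>m<k. w m * y m)^2)"
proof -
  have e: "(x m - x l)^2 + (y m - y l)^2 = 2 - 2 * (x m * x l) - 2 * (y m * y l)" for m l
    using u[of m] u[of l] by (simp add: power2_eq_square algebra_simps)
  have "(\<Sum>m<k. \<Sum>l<k. w m * w l * ((x m - x l)^2 + (y m - y l)^2))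
      = (\<Sum>m<k. \<Sum>l<k. 2 * (w m * w l) - 2 * ((w m * x m) * (w l * x l)) - 2 * ((w m * y m) * (w l * y l)))"
    by (intro sum.cong refl) (simp add: e algebra_simps)
  also have "\<dots> = 2 * (\<Sum>m<k. \<Sum>l<k. w m * w l) - 2 * (\<Sum>m<k. \<Sum>l<k. (w m * x m) * (w l * x l))
                 - 2 * (\<Sum>m<k. \<Sum>l<k. (w m * y m) * (w l * y l))"
    by (simp add: sum_subtractf sum_distrib_left)
  also have "\<dots> = 2 * ((\<Sum>m<k. w m) * (\<Sum>l<k. w l)) - 2 * ((\<Sum>m<k. w m * x m) * (\<Sum>l<k. w l * x l))
                 - 2 * ((\<Sum>m<k. w m * y m) * (\<Sum>l<k. w l * y l))"
    by (simp only: sum_product)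
  also have "\<dots> = 2 - 2 * ((\<Sum>m<k. w m * x m)^2 + (\<Sum>m<k. w m * y m)^2)"
    using s by (simp add: power2_eq_square algebra_simps)
  finally show ?thesis .
qed

lemma weighted_unit_sum:
  fixes w :: "nat \<Rightarrow> real" and z :: "nat \<Rightarrow> complex"
  assumes k: "k \<ge> 1" and s: "(\<Sum>m<k. w m) = 1" and wa: "\<And>m. m < k \<Longrightarrow> a \<le> w m" and a: "0 \<le> a"
    and u: "\<And>m. norm (z m) = 1"
  shows "norm (\<Sum>m<k. w m *\<^sub>R z m) ^ 2 \<le> 1 - a^2 * (\<Sum>m\<in>{1..<k}. norm (z m - z 0) ^ 2)"
proof -
  define x where "x m = Re (z m)" for m
  define y where "y m = Im (z m)" for m
  have ux: "x m ^ 2 + y m ^ 2 = 1" for m using u[of m] unfolding x_def y_def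
    by (metis cmod_power2 power_one)
  define D where "D m l = (x m - x l)^2 + (y m - y l)^2" for m l
  have Dn: "D m l = norm (z m - z l) ^ 2" for m l unfolding D_def x_def y_def by (simp add: cmod_power2)
  have D0: "D m l \<ge> 0" for m l unfolding D_def by simp
  have Dsym: "D m l = D l m" for m l unfolding D_def by (simp add: power2_commute)
  have nsq: "norm (\<Sum>m<k. w m *\<^sub>R z m) ^ 2 = (\<Sum>m<k. w m * x m)^2 + (\<Sum>m<k. w m * y m)^2"
    unfolding x_def y_def by (simp add: cmod_power2 Re_sum Im_sum)
  have wn: "w m \<ge> 0" if "m < k" for m using wa[OF that] a by simp
  let ?f = "\<lambda>m l. w m * w l * D m l"
  have fn: "?f m l \<ge> 0" if "m < k" "l < k" for m l using wn[OF that(1)] wn[OF that(2)] D0 by simp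
  have split: "{..<k} = insert 0 {1..<k}" using k by auto
  have "(\<Sum>m<k. \<Sum>l<k. ?f m l) = (\<Sum>l<k. ?f 0 l) + (\<Sum>m\<in>{1..<k}. \<Sum>l<k. ?f m l)"
    by (subst split, subst sum.insert) auto
  also have "(\<Sum>l<k. ?f 0 l) = ?f 0 0 + (\<Sum>l\<in>{1..<k}. ?f 0 l)"
    by (subst split, subst sum.insert) auto
  also have "?f 0 0 = 0" unfolding D_def by simp
  finally have h1: "(\<Sum>m<k. \<Sum>l<k. ?f m l) = (\<Sum>l\<in>{1..<k}. ?f 0 l) + (\<Sum>m\<in>{1..<k}. \<Sum>l<k. ?f m l)" by simp
  have h2: "(\<Sum>m\<in>{1..<k}. \<Sum>l<k. ?f m l) \<ge> (\<Sum>m\<in>{1..<k}. ?f m 0)"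
  proof (rule sum_mono)
    fix m assume m: "m \<in> {1..<k}"
    have "(\<Sum>l<k. ?f m l) = ?f m 0 + (\<Sum>l\<in>{1..<k}. ?f m l)"
      by (subst split, subst sum.insert) auto
    moreover have "(\<Sum>l\<in>{1..<k}. ?f m l) \<ge> 0" using m by (intro sum_nonneg fn) auto
    ultimately show "(\<Sum>l<k. ?f m l) \<ge> ?f m 0" by simp
  qed
  have h3: "?f m 0 \<ge> a^2 * D m 0" "?f 0 m \<ge> a^2 * D m 0" if m: "m \<in> {1..<k}" for m
  proof -
    have "a * a \<le> w m * w 0" using wa[of m] wa[of 0] m a k by (intro mult_mono) auto
    then have "a^2 * D m 0 \<le> (w m * w 0) * D m 0" using D0 by (simp add: power2_eq_square mult_right_mono)
    then show "?f m 0 \<ge> a^2 * D m 0" "?f 0 m \<ge> a^2 * D m 0" using Dsym[of m 0] by (simp_all add: mult.commute)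
  qed
  have "(\<Sum>m<k. \<Sum>l<k. ?f m l) \<ge> 2 * (a^2 * (\<Sum>m\<in>{1..<k}. D m 0))"
  proof -
    have "(\<Sum>l\<in>{1..<k}. ?f 0 l) \<ge> (\<Sum>m\<in>{1..<k}. a^2 * D m 0)" using h3 by (intro sum_mono) auto
    moreover have "(\<Sum>m\<in>{1..<k}. ?f m 0) \<ge> (\<Sum>m\<in>{1..<k}. a^2 * D m 0)" using h3 by (intro sum_mono) auto
    moreover have "2 * (a^2 * (\<Sum>m\<in>{1..<k}. D m 0)) = (\<Sum>m\<in>{1..<k}. a^2 * D m 0) + (\<Sum>m\<in>{1..<k}. a^2 * D m 0)"
      by (simp add: sum_distrib_left)
    ultimately show ?thesis using h1 h2 by linarith
  qed
  moreover have "(\<Sum>m<k. \<Sum>l<k. ?f m l) = 2 - 2 * ((\<Sum>m<k. w m * x m)^2 + (\<Sum>m<k. w m * y m)^2)"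
    unfolding D_def by (rule quad_ident[OF ux s])
  ultimately have "(\<Sum>m<k. w m * x m)^2 + (\<Sum>m<k. w m * y m)^2 \<le> 1 - a^2 * (\<Sum>m\<in>{1..<k}. D m 0)" by simp
  then show ?thesis unfolding nsq Dn .
qed

lemma weighted_unit_sum_exp:
  fixes w :: "nat \<Rightarrow> real" and z :: "nat \<Rightarrow> complex"
  assumes k: "k \<ge> 1" and s: "(\<Sum>m<k. w m) = 1" and wa: "\<And>m. m < k \<Longrightarrow> a \<le> w m" and a: "0 \<le> a"
    and u: "\<And>m. norm (z m) = 1"
  shows "norm (\<Sum>m<k. w m *\<^sub>R z m) \<le> exp (- (a^2 / 2) * (\<Sum>m\<in>{1..<k}. norm (z m - z 0) ^ 2))"
proof -
  let ?S = "\<Sum>m\<in>{1..<k}. norm (z m - z 0) ^ 2"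
  have "norm (\<Sum>m<k. w m *\<^sub>R z m) ^ 2 \<le> 1 - a^2 * ?S" by (rule weighted_unit_sum[OF assms])
  also have "\<dots> \<le> exp (- (a^2 * ?S))" using exp_ge_add_one_self[of "- (a^2 * ?S)"] by simp
  also have "\<dots> = exp (- (a^2 / 2) * ?S) ^ 2"
    by (simp add: power2_eq_square exp_add[symmetric])
  finally show ?thesis by (rule power2_le_imp_le) simp
qed


lemma sin_lower: fixes x :: real assumes "0 \<le> x" "x \<le> 2" shows "x / 3 \<le> sin x"
proof -
  have h0: "\<bar>sin x - (\<Sum>m<3. sin_coeff m * x ^ m)\<bar> \<le> inverse (fact 3) * \<bar>x\<bar> ^ 3"
    by (rule Maclaurin_sin_bound)
  have se: "(\<Sum>m<3. sin_coeff m * x ^ m) = x" by (simp add: sin_coeff_def eval_nat_numeral)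
  have f3: "(fact 3::real) = 6" by (simp add: eval_nat_numeral)
  have r: "inverse (fact 3) * \<bar>x\<bar> ^ 3 = x ^ 3 / 6" using f3 assms by simp
  have h: "\<bar>sin x - x\<bar> \<le> x ^ 3 / 6" using h0 unfolding se r .
  then have "sin x \<ge> x - x ^ 3 / 6" unfolding abs_le_iff by linarith
  moreover have "x ^ 3 \<le> 4 * x"
  proof -
    have "x ^ 2 \<le> 2 ^ 2" using assms by (intro power_mono) auto
    then have "x * x ^ 2 \<le> x * 4" using assms by (intro mult_left_mono) auto
    then show ?thesis by (simp add: eval_nat_numeral algebra_simps)
  qed
  ultimately show ?thesis by simp
qed

lemma norm_ee_minus_1_sq: "norm (ee x - 1) ^ 2 = 4 * sin (pi * x) ^ 2"
proof -
  have "norm (ee x - 1) ^ 2 = (cos (2*pi*x) - 1)^2 + sin (2*pi*x) ^ 2"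
    unfolding ee_def by (simp add: cmod_power2)
  also have "\<dots> = 2 - 2 * cos (2*pi*x)" by (simp add: power2_eq_square algebra_simps sin_squared_eq)
  also have "cos (2*pi*x) = 1 - 2 * sin (pi*x) ^ 2" using cos_double_sin[of "pi*x"] by (simp add: mult.assoc)
  finally show ?thesis by simp
qed

lemma ee_gap:
  fixes r d :: nat
  assumes d: "d \<ge> 1" and r: "r \<le> d"
  shows "norm (ee (real r / real d) - 1) ^ 2 \<ge> 4 * (real (min r (d - r)) / real d) ^ 2"
proof -
  have key: "sin (pi * (real r / real d)) \<ge> real (min r (d - r)) / real d"
  proof (cases "2 * r \<le> d")
    case True
    let ?x = "pi * (real r / real d)"
    have x0: "0 \<le> ?x" by simp
    have "real r / real d \<le> 1 / 2" using True d by (simp add: field_simps)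
    then have "?x \<le> pi * (1 / 2)" by (intro mult_left_mono) auto
    then have "?x \<le> pi / 2" by simp
    then have x2: "?x \<le> 2" using pi_less_4 by linarith
    have "real r / real d * 1 \<le> real r / real d * (pi / 3)" by (rule mult_left_mono) (use pi_gt3 in auto)
    then have "real r / real d \<le> ?x / 3" by (simp add: algebra_simps)
    also have "\<dots> \<le> sin ?x" using sin_lower[OF x0 x2] .
    finally show ?thesis using True by simp
  next
    case False
    let ?x = "pi * (real (d - r) / real d)"
    have x0: "0 \<le> ?x" by simp
    have "real (d - r) / real d \<le> 1 / 2" using False d r by (simp add: field_simps of_nat_diff)
    then have "?x \<le> pi * (1 / 2)" by (intro mult_left_mono) auto
    then have "?x \<le> pi / 2" by simp
    then have x2: "?x \<le> 2" using pi_less_4 by linarith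
    have "real (d - r) / real d * 1 \<le> real (d - r) / real d * (pi / 3)" by (rule mult_left_mono) (use pi_gt3 in auto)
    then have "real (d - r) / real d \<le> ?x / 3" by (simp add: algebra_simps)
    also have "\<dots> \<le> sin ?x" using sin_lower[OF x0 x2] .
    also have "sin ?x = sin (pi * (real r / real d))"
    proof -
      have "?x = pi - pi * (real r / real d)" using d r by (simp add: of_nat_diff field_simps)
      then show ?thesis by simp
    qed
    finally show ?thesis using False by simp
  qed
  have nn: "0 \<le> real (min r (d - r)) / real d" by simp
  have "(real (min r (d - r)) / real d) ^ 2 \<le> sin (pi * (real r / real d)) ^ 2"
    using key nn by (intro power_mono) auto
  then show ?thesis using norm_ee_minus_1_sq[of "real r / real d"] by simp
qed

lemma tail_inv_sq:
  fixes S N :: nat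
  assumes S: "S \<ge> 1" and N: "N \<ge> S"
  shows "(\<Sum>r\<in>{S<..N}. 1 / real r ^ 2) \<le> 1 / real S - 1 / real N"
  using N
proof (induction N rule: dec_induct)
  case base then show ?case by simp
next
  case (step N)
  have N1: "real N \<ge> 1" using step S by simp
  have "(\<Sum>r\<in>{S<..Suc N}. 1 / real r ^ 2) = (\<Sum>r\<in>{S<..N}. 1 / real r ^ 2) + 1 / real (Suc N) ^ 2"
    using step by (simp add: atLeastSucAtMost_greaterThanAtMost[symmetric])
  also have "\<dots> \<le> 1 / real S - 1 / real N + 1 / real (Suc N) ^ 2" using step by simp
  also have "\<dots> \<le> 1 / real S - 1 / real (Suc N)"
  proof -
    have "1 / real (Suc N) ^ 2 \<le> 1 / (real N * real (Suc N))"
      using N1 by (intro divide_left_mono) (auto simp: power2_eq_square)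
    also have "\<dots> = 1 / real N - 1 / real (Suc N)" using N1 by (simp add: field_simps)
    finally show ?thesis by simp
  qed
  finally show ?case .
qed

lemma exp_neg_le_inv: "(y::real) > 0 \<Longrightarrow> exp (- y) \<le> 1 / y"
proof -
  assume y: "y > 0"
  have "y \<le> exp y" using exp_ge_add_one_self[of y] by linarith
  then show ?thesis using y by (simp add: exp_minus field_simps)
qed

lemma gauss_sum:
  fixes \<mu> :: real
  assumes mu: "\<mu> > 0"
  shows "(\<Sum>r\<in>{1..N}. exp (- \<mu> * real r ^ 2)) \<le> 3 / sqrt \<mu>"
proof -
  have term_inv: "exp (- \<mu> * real r ^ 2) \<le> 1 / \<mu> * (1 / real r ^ 2)" if "r \<ge> 1" for r
  proof -
    have "exp (- (\<mu> * real r ^ 2)) \<le> 1 / (\<mu> * real r ^ 2)" using mu that by (intro exp_neg_le_inv) simp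
    then show ?thesis by simp
  qed
  have sq: "sqrt \<mu> > 0" using mu by simp
  show ?thesis
  proof (cases "\<mu> \<ge> 1")
    case True
    have "(\<Sum>r\<in>{1..N}. exp (- \<mu> * real r ^ 2)) \<le> (\<Sum>r\<in>{1..N}. 1 / \<mu> * (1 / real r ^ 2))"
      using term_inv by (intro sum_mono) auto
    also have "\<dots> = 1 / \<mu> * (\<Sum>r\<in>{1..N}. 1 / real r ^ 2)" by (simp add: sum_distrib_left)
    also have "\<dots> \<le> 1 / \<mu> * 2"
    proof -
      have "(\<Sum>r\<in>{1..N}. 1 / real r ^ 2) \<le> 2"
      proof (cases "N \<ge> 1")
        case True
        have "{1..N} = insert 1 {1<..N}" using True by auto
        then have "(\<Sum>r\<in>{1..N}. 1 / real r ^ 2) = 1 + (\<Sum>r\<in>{1<..N}. 1 / real r ^ 2)" by simp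
        also have "\<dots> \<le> 1 + (1 / real 1 - 1 / real N)" using tail_inv_sq[of 1 N] True by simp
        also have "\<dots> \<le> 2" by simp
        finally show ?thesis .
      qed simp
      then show ?thesis using mu by (intro mult_left_mono) auto
    qed
    also have "\<dots> \<le> 3 / sqrt \<mu>"
    proof -
      have "sqrt \<mu> \<le> \<mu>" using True by (metis real_sqrt_le_iff real_sqrt_pow2 power2_eq_square mult_le_cancel_left1 le_less_trans less_eq_real_def mu real_sqrt_ge_one real_sqrt_gt_zero zero_less_one)
      then show ?thesis using sq mu by (simp add: field_simps)
    qed
    finally show ?thesis .
  next
    case False
    define S where "S = nat \<lceil>1 / sqrt \<mu>\<rceil>"
    have "sqrt \<mu> \<le> 1" using False by simp
    then have isq: "1 / sqrt \<mu> \<ge> 1" using sq by (simp add: field_simps)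
    have S1: "real S \<ge> 1 / sqrt \<mu>" unfolding S_def by linarith
    have S2: "real S \<le> 1 / sqrt \<mu> + 1" unfolding S_def using isq by linarith
    have Sge: "S \<ge> 1" using S1 isq by linarith
    have U: "{1..N} \<subseteq> {1..S} \<union> {S<..max N S}" by auto
    have "(\<Sum>r\<in>{1..N}. exp (- \<mu> * real r ^ 2)) \<le> (\<Sum>r\<in>{1..S} \<union> {S<..max N S}. exp (- \<mu> * real r ^ 2))"
      by (rule sum_mono2) (use U in auto)
    also have "\<dots> = (\<Sum>r\<in>{1..S}. exp (- \<mu> * real r ^ 2)) + (\<Sum>r\<in>{S<..max N S}. exp (- \<mu> * real r ^ 2))"
      by (rule sum.union_disjoint) auto
    also have "(\<Sum>r\<in>{1..S}. exp (- \<mu> * real r ^ 2)) \<le> (\<Sum>r\<in>{1..S}. 1)"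
      by (intro sum_mono) (use mu in auto)
    also have "(\<Sum>r\<in>{1..S}. 1::real) = real S" by simp
    also have "(\<Sum>r\<in>{S<..max N S}. exp (- \<mu> * real r ^ 2)) \<le> (\<Sum>r\<in>{S<..max N S}. 1 / \<mu> * (1 / real r ^ 2))"
      using term_inv Sge by (intro sum_mono) auto
    also have "\<dots> = 1 / \<mu> * (\<Sum>r\<in>{S<..max N S}. 1 / real r ^ 2)" by (simp add: sum_distrib_left)
    also have "\<dots> \<le> 1 / \<mu> * (1 / real S)"
    proof -
      have "(\<Sum>r\<in>{S<..max N S}. 1 / real r ^ 2) \<le> 1 / real S - 1 / real (max N S)"
        using tail_inv_sq[OF Sge, of "max N S"] by simp
      also have "\<dots> \<le> 1 / real S" by simp
      finally show ?thesis using mu by (intro mult_left_mono) auto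
    qed
    also have "1 / \<mu> * (1 / real S) \<le> 1 / \<mu> * sqrt \<mu>"
    proof -
      have "1 / real S \<le> sqrt \<mu>" using S1 sq Sge by (simp add: field_simps)
      then show ?thesis using mu by (intro mult_left_mono) auto
    qed
    also have "1 / \<mu> * sqrt \<mu> = 1 / sqrt \<mu>" using mu by (simp add: field_simps)
    finally have "(\<Sum>r\<in>{1..N}. exp (- \<mu> * real r ^ 2)) \<le> real S + 1 / sqrt \<mu>" by simp
    also have "\<dots> \<le> 3 / sqrt \<mu>" using S2 isq by simp
    finally show ?thesis .
  qed
qed


definition G :: "real \<Rightarrow> nat \<Rightarrow> real" where
  "G l d = (\<Sum>r<d. exp (- l * norm (ee (real r / real d) - 1) ^ 2))"

lemma ee_shift:
  fixes r s d :: nat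
  assumes d: "d \<ge> 1" and s: "s < d"
  shows "norm (ee (real r / real d) - ee (real s / real d)) = norm (ee (real ((r + (d - s)) mod d) / real d) - 1)"
proof -
  let ?j = "(r + (d - s)) mod d" and ?Q = "(r + (d - s)) div d"
  have e1: "d * ?Q + ?j = r + (d - s)" by (rule mult_div_mod_eq)
  have "real (d * ?Q + ?j) = real (r + (d - s))" using arg_cong[OF e1, of real] .
  moreover have "real (r + (d - s)) = real r + real (d - s)" by (rule of_nat_add)
  moreover have "real (d - s) = real d - real s" using s by (simp add: of_nat_diff)
  moreover have "real (d * ?Q + ?j) = real d * real ?Q + real ?j" by (simp only: of_nat_add of_nat_mult)
  ultimately have "real d * real ?Q + real ?j = real r + real d - real s" by linarith
  then have "real r / real d = real s / real d + real ?j / real d + real_of_int (int ?Q - 1)"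
    using d by (simp add: field_simps)
  then have "ee (real r / real d) = ee (real s / real d) * ee (real ?j / real d)"
    using ee_int[of "int ?Q - 1"] by (simp add: ee_add)
  then have "ee (real r / real d) - ee (real s / real d) = ee (real s / real d) * (ee (real ?j / real d) - 1)"
    by (simp add: algebra_simps)
  then show ?thesis by (simp add: norm_mult)
qed

lemma shift_sum:
  fixes s d :: nat
  assumes d: "d \<ge> 1" and s: "s < d"
  shows "(\<Sum>r<d. h (norm (ee (real r / real d) - ee (real s / real d)))) = (\<Sum>r<d. h (norm (ee (real r / real d) - 1)))"
proof (rule sum.reindex_bij_witness[where i = "\<lambda>r'. (r' + s) mod d" and j = "\<lambda>r. (r + (d - s)) mod d"])
  fix r assume r: "r \<in> {..<d}"
  have "((r + (d - s)) mod d + s) mod d = (r + (d - s) + s) mod d" by (simp add: mod_add_left_eq)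
  also have "r + (d - s) + s = r + d" using s by simp
  finally show "((r + (d - s)) mod d + s) mod d = r" using r by simp
next
  fix r assume r: "r \<in> {..<d}"
  show "(r + (d - s)) mod d \<in> {..<d}" using d by simp
next
  fix r assume r: "r \<in> {..<d}"
  have "((r + s) mod d + (d - s)) mod d = (r + s + (d - s)) mod d" by (simp add: mod_add_left_eq)
  also have "r + s + (d - s) = r + d" using s by simp
  finally show "((r + s) mod d + (d - s)) mod d = r" using r by simp
next
  fix r assume r: "r \<in> {..<d}"
  show "(r + s) mod d \<in> {..<d}" using d by simp
next
  fix r assume r: "r \<in> {..<d}"
  show "h (norm (ee (real ((r + (d - s)) mod d) / real d) - 1)) = h (norm (ee (real r / real d) - ee (real s / real d)))"
    using ee_shift[OF d s, of r] by simp
qed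

lemma sum_Tset:
  fixes l :: real
  assumes d: "d \<ge> 1"
  shows "(\<Sum>t\<in>Tset (Suc k) d. exp (- l * (\<Sum>m\<in>{1..<Suc k}. norm (ee (real (t ! m) / real d) - ee (real (t ! 0) / real d)) ^ 2)))
       = real d * G l d ^ k"
proof -
  have "(\<Sum>t\<in>Tset (Suc k) d. exp (- l * (\<Sum>m\<in>{1..<Suc k}. norm (ee (real (t ! m) / real d) - ee (real (t ! 0) / real d)) ^ 2)))
      = (\<Sum>(s, t)\<in>{..<d} \<times> Tset k d. exp (- l * (\<Sum>m\<in>{1..<Suc k}. norm (ee (real ((s # t) ! m) / real d) - ee (real ((s # t) ! 0) / real d)) ^ 2)))"
  proof -
    have inj: "inj_on (\<lambda>(s, t). s # t) ({..<d} \<times> Tset k d)" by (auto simp: inj_on_def)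
    show ?thesis unfolding Tset_Suc sum.reindex[OF inj] by (simp only: comp_def split_def)
  qed
  also have "\<dots> = (\<Sum>(s, t)\<in>{..<d} \<times> Tset k d. \<Prod>m<k. exp (- l * norm (ee (real (t ! m) / real d) - ee (real s / real d)) ^ 2))"
  proof (intro sum.cong refl, clarify)
    fix s t
    have "(\<Sum>m\<in>{1..<Suc k}. norm (ee (real ((s # t) ! m) / real d) - ee (real ((s # t) ! 0) / real d)) ^ 2)
        = (\<Sum>m<k. norm (ee (real (t ! m) / real d) - ee (real s / real d)) ^ 2)"
    proof -
      have "{1..<Suc k} = Suc ` {..<k}" by (simp add: lessThan_atLeast0 atLeastLessThanSuc_atLeastAtMost image_Suc_lessThan)
      then show ?thesis by (simp add: sum.reindex)
    qed
    then show "exp (- l * (\<Sum>m\<in>{1..<Suc k}. norm (ee (real ((s # t) ! m) / real d) - ee (real ((s # t) ! 0) / real d)) ^ 2))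
        = (\<Prod>m<k. exp (- l * norm (ee (real (t ! m) / real d) - ee (real s / real d)) ^ 2))"
      by (simp add: sum_distrib_left exp_sum[symmetric])
  qed
  also have "\<dots> = (\<Sum>s<d. \<Sum>t\<in>Tset k d. \<Prod>m<k. exp (- l * norm (ee (real (t ! m) / real d) - ee (real s / real d)) ^ 2))"
    by (simp add: sum.cartesian_product)
  also have "\<dots> = (\<Sum>s<d. \<Prod>m<k. \<Sum>r<d. exp (- l * norm (ee (real r / real d) - ee (real s / real d)) ^ 2))"
    by (intro sum.cong refl) (rule prod_sum_lists[symmetric])
  also have "\<dots> = (\<Sum>s<d. \<Prod>m<k. G l d)"
  proof (intro sum.cong refl prod.cong)
    fix s assume s: "s \<in> {..<d}"
    show "(\<Sum>r<d. exp (- l * norm (ee (real r / real d) - ee (real s / real d)) ^ 2)) = G l d"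
      unfolding G_def using shift_sum[OF d, of s "\<lambda>x. exp (- l * x ^ 2)"] s by simp
  qed
  also have "\<dots> = real d * G l d ^ k" by simp
  finally show ?thesis .
qed

lemma G_ge_1: "d \<ge> 1 \<Longrightarrow> G l d \<ge> 1"
proof -
  assume d: "d \<ge> 1"
  have "{..<d} = insert 0 {1..<d}" using d by auto
  then have "G l d = 1 + (\<Sum>r\<in>{1..<d}. exp (- l * norm (ee (real r / real d) - 1) ^ 2))"
    unfolding G_def by simp
  moreover have "(\<Sum>r\<in>{1..<d}. exp (- l * norm (ee (real r / real d) - 1) ^ 2)) \<ge> 0" by (intro sum_nonneg) simp
  ultimately show ?thesis by simp
qed

lemma G_le_d: "l \<ge> 0 \<Longrightarrow> G l d \<le> real d"
proof -
  assume l: "l \<ge> 0"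
  have "G l d \<le> (\<Sum>r<d. 1)" unfolding G_def using l by (intro sum_mono) (simp add: mult_nonneg_nonneg)
  then show ?thesis by simp
qed

lemma G_minus_1:
  assumes d: "d \<ge> 1" and l: "l > 0"
  shows "G l d - 1 \<le> 3 * real d / sqrt l"
proof -
  let ?g = "\<lambda>r. exp (- l * norm (ee (real r / real d) - 1) ^ 2)"
  define \<mu> where "\<mu> = 4 * l / real d ^ 2"
  have mu: "\<mu> > 0" unfolding \<mu>_def using l d by simp
  have "{..<d} = insert 0 {1..<d}" using d by auto
  then have "G l d - 1 = (\<Sum>r\<in>{1..<d}. ?g r)" unfolding G_def by simp
  also have "\<dots> \<le> (\<Sum>r\<in>{1..<d}. exp (- \<mu> * real r ^ 2) + exp (- \<mu> * real (d - r) ^ 2))"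
  proof (rule sum_mono)
    fix r assume r: "r \<in> {1..<d}"
    have gap: "norm (ee (real r / real d) - 1) ^ 2 \<ge> 4 * (real (min r (d - r)) / real d) ^ 2"
      using ee_gap[OF d, of r] r by simp
    have "?g r \<le> exp (- l * (4 * (real (min r (d - r)) / real d) ^ 2))"
      using gap l by (simp add: mult_left_mono)
    also have "\<dots> = exp (- \<mu> * real (min r (d - r)) ^ 2)"
      unfolding \<mu>_def by (simp add: power_divide)
    also have "\<dots> \<le> exp (- \<mu> * real r ^ 2) + exp (- \<mu> * real (d - r) ^ 2)"
      by (cases "r \<le> d - r") (auto simp: min_def)
    finally show "?g r \<le> exp (- \<mu> * real r ^ 2) + exp (- \<mu> * real (d - r) ^ 2)" .
  qed
  also have "\<dots> = (\<Sum>r\<in>{1..<d}. exp (- \<mu> * real r ^ 2)) + (\<Sum>r\<in>{1..<d}. exp (- \<mu> * real (d - r) ^ 2))"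
    by (simp add: sum.distrib)
  also have "(\<Sum>r\<in>{1..<d}. exp (- \<mu> * real (d - r) ^ 2)) = (\<Sum>r\<in>{1..<d}. exp (- \<mu> * real r ^ 2))"
    by (rule sum.reindex_bij_witness[where i = "\<lambda>r. d - r" and j = "\<lambda>r. d - r"]) auto
  also have "(\<Sum>r\<in>{1..<d}. exp (- \<mu> * real r ^ 2)) \<le> (\<Sum>r\<in>{1..d}. exp (- \<mu> * real r ^ 2))"
    by (rule sum_mono2) auto
  also have "\<dots> \<le> 3 / sqrt \<mu>" by (rule gauss_sum[OF mu])
  also have "3 / sqrt \<mu> + 3 / sqrt \<mu> = 3 * real d / sqrt l"
  proof -
    have "sqrt \<mu> = 2 * sqrt l / real d" unfolding \<mu>_def using d l
      by (simp add: real_sqrt_divide real_sqrt_mult)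
    then have "3 / sqrt \<mu> + 3 / sqrt \<mu> = 6 / (2 * sqrt l / real d)" by simp
    also have "\<dots> = 3 * real d / sqrt l" using d l by (simp add: field_simps)
    finally show ?thesis .
  qed
  finally show ?thesis by simp
qed


lemma pow_minus_one_le:
  fixes x :: real
  assumes "x \<ge> 1"
  shows "x ^ n - 1 \<le> real n * x ^ (n - 1) * (x - 1)"
proof (induction n)
  case 0 then show ?case by simp
next
  case (Suc n)
  have A: "x ^ Suc n - 1 = x * (x ^ n - 1) + (x - 1)" by (simp add: algebra_simps)
  have B: "x * (x ^ n - 1) \<le> x * (real n * x ^ (n - 1) * (x - 1))"
    using Suc assms by (intro mult_left_mono) auto
  have C: "x * (real n * x ^ (n - 1) * (x - 1)) = real n * x ^ n * (x - 1)"
  proof (cases n)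
    case 0 then show ?thesis by simp
  next
    case (Suc m) then show ?thesis by (simp add: algebra_simps)
  qed
  have D: "x - 1 \<le> x ^ n * (x - 1)"
  proof -
    have "1 \<le> x ^ n" using assms by (rule one_le_power)
    then have "1 * (x - 1) \<le> x ^ n * (x - 1)" using assms by (intro mult_right_mono) auto
    then show ?thesis by simp
  qed
  have E: "real n * x ^ n * (x - 1) + x ^ n * (x - 1) = real (Suc n) * x ^ (Suc n - 1) * (x - 1)"
    by (simp add: algebra_simps)
  show ?case using A B C D E by linarith
qed

lemma pow_pred: "n \<ge> 1 \<Longrightarrow> (x::real) ^ n = x * x ^ (n - 1)"
  by (cases n) auto

locale walk_ctx2 = walk_ctx +
  fixes a :: real
  assumes a_pos: "a > 0" and a_le: "\<And>j x. j \<ge> 1 \<Longrightarrow> x \<in> set (\<sigma> j) \<Longrightarrow> a \<le> x"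
    and k2: "k \<ge> 2"
begin

definition Sg :: "nat \<Rightarrow> nat list \<Rightarrow> real" where
  "Sg d t = (\<Sum>m\<in>{1..<k}. norm (ee (real (t ! m) / real d) - ee (real (t ! 0) / real d)) ^ 2)"

lemma phi_bound:
  assumes j: "j \<ge> 1"
  shows "norm (phi (\<sigma> j) d t) \<le> exp (- (a^2 / 2) * Sg d t)"
proof -
  have v: "valid_type k (\<sigma> j)" using vt j by simp
  have len: "length (\<sigma> j) = k" and s1: "sum_list (\<sigma> j) = 1" using v unfolding valid_type_def by auto
  have s: "(\<Sum>m<k. \<sigma> j ! m) = 1" using s1 len by (simp add: sum_list_sum_nth atLeast0LessThan)
  have wa: "a \<le> \<sigma> j ! m" if "m < k" for m using a_le[OF j] len that by (simp add: nth_mem)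
  show ?thesis unfolding phi_def Sg_def
    by (rule weighted_unit_sum_exp[where w = "\<lambda>m. \<sigma> j ! m" and z = "\<lambda>m. ee (real (t ! m) / real d)"])
       (use s wa a_pos k2 in auto)
qed

lemma F_bound: "norm (F i d t) \<le> exp (- (real i * a^2 / 2) * Sg d t)"
proof -
  have "norm (F i d t) = (\<Prod>j\<in>{1..i}. norm (phi (\<sigma> j) d t))"
    unfolding F_prod by (simp add: prod_norm)
  also have "\<dots> \<le> (\<Prod>j\<in>{1..i}. exp (- (a^2 / 2) * Sg d t))"
  proof (rule prod_mono)
    fix j assume "j \<in> {1..i}"
    then show "0 \<le> norm (phi (\<sigma> j) d t) \<and> norm (phi (\<sigma> j) d t) \<le> exp (- (a^2 / 2) * Sg d t)"
      using phi_bound[of j d t] by auto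
  qed
  also have "\<dots> = exp (- (a^2 / 2) * Sg d t) ^ i" by simp
  also have "\<dots> = exp (- (real i * a^2 / 2) * Sg d t)" by (simp add: exp_of_nat_mult[symmetric] algebra_simps)
  finally show ?thesis .
qed

lemma F_const:
  assumes d: "d \<ge> 1" and di: "d dvd i"
  shows "F i d (replicate k c) = 1"
proof -
  have ph: "phi (\<sigma> j) d (replicate k c) = ee (real c / real d)" if j: "j \<in> {1..i}" for j
  proof -
    have v: "valid_type k (\<sigma> j)" using vt j by simp
    have len: "length (\<sigma> j) = k" and s1: "sum_list (\<sigma> j) = 1" using v unfolding valid_type_def by auto
    have s: "(\<Sum>m<k. \<sigma> j ! m) = 1" using s1 len by (simp add: sum_list_sum_nth atLeast0LessThan)
    have "phi (\<sigma> j) d (replicate k c) = (\<Sum>m<k. (\<sigma> j ! m) *\<^sub>R ee (real c / real d))"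
      unfolding phi_def by (intro sum.cong refl) simp
    also have "\<dots> = (\<Sum>m<k. \<sigma> j ! m) *\<^sub>R ee (real c / real d)" by (simp add: scaleR_sum_left)
    finally show ?thesis using s by simp
  qed
  have "F i d (replicate k c) = ee (real c / real d) ^ i"
    unfolding F_prod using ph by simp
  also have "\<dots> = ee (real i * (real c / real d))" by (simp add: ee_power)
  also have "\<dots> = 1"
  proof -
    obtain q where q: "i = d * q" using di by blast
    have "real i * (real c / real d) = real_of_int (int (q * c))" using d q by (simp add: field_simps)
    then show ?thesis using ee_int[of "int (q * c)"] by simp
  qed
  finally show ?thesis .
qed

lemma Pd_bound:
  assumes i: "i \<ge> 1" and d: "d \<ge> 1" and di: "d dvd i"
  shows "\<bar>Pd i d - 1 / real d ^ (k - 1)\<bar> \<le> 3 * real (k - 1) / sqrt (real i * a^2 / 2)"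
proof -
  define l where "l = real i * a^2 / 2"
  have l0: "l > 0" unfolding l_def using i a_pos by simp
  define C where "C = (\<lambda>c. replicate k c) ` {..<d}"
  have CT: "C \<subseteq> Tset k d" unfolding C_def Tset_def by auto
  have cardC: "card C = d"
  proof -
    have "inj_on (\<lambda>c. replicate k c) {..<d}" using k2 by (auto simp: inj_on_def replicate_eq_replicate)
    then show ?thesis unfolding C_def by (simp add: card_image)
  qed
  have finT: "finite (Tset k d)" by (rule finite_Tset)
  define E where "E t = exp (- l * Sg d t)" for t
  have indsum: "(\<Sum>t\<in>Tset k d. (if t \<in> C then 1 else 0 :: real)) = real d"
    using CT finT cardC by (simp add: sum.If_cases Int_absorb1)
  have main: "complex_of_real (Pd i d - 1 / real d ^ (k - 1))
      = (\<Sum>t\<in>Tset k d. F i d t - complex_of_real (if t \<in> C then 1 else 0)) / of_nat d ^ k"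
  proof -
    have "complex_of_real (1 / real d ^ (k - 1)) = complex_of_real (real d) / of_nat d ^ k"
    proof -
      have "real d ^ k = real d * real d ^ (k - 1)" using k2 by (intro pow_pred) simp
      then have "1 / real d ^ (k - 1) = real d / real d ^ k" using d by (simp add: field_simps)
      then show ?thesis by simp
    qed
    also have "complex_of_real (real d) = (\<Sum>t\<in>Tset k d. complex_of_real (if t \<in> C then 1 else 0))"
      using indsum by (simp only: of_real_sum[symmetric])
    finally have h: "complex_of_real (1 / real d ^ (k - 1)) = (\<Sum>t\<in>Tset k d. complex_of_real (if t \<in> C then 1 else 0)) / of_nat d ^ k" .
    show ?thesis using Pd_fourier[OF d, of i] h by (simp add: sum_subtractf diff_divide_distrib)
  qed
  have termb: "norm (F i d t - complex_of_real (if t \<in> C then 1 else 0)) \<le> E t - (if t \<in> C then 1 else 0)"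
    if t: "t \<in> Tset k d" for t
  proof (cases "t \<in> C")
    case True
    then obtain c where c: "t = replicate k c" unfolding C_def by auto
    have "Sg d t = 0" unfolding Sg_def c using k2 by simp
    then show ?thesis using True c F_const[OF d di] unfolding E_def by simp
  next
    case False
    then show ?thesis using F_bound[of i d t] unfolding E_def l_def by simp
  qed
  have "\<bar>Pd i d - 1 / real d ^ (k - 1)\<bar> = norm (complex_of_real (Pd i d - 1 / real d ^ (k - 1)))"
    by (rule norm_of_real[symmetric])
  also have "\<dots> = norm (\<Sum>t\<in>Tset k d. F i d t - complex_of_real (if t \<in> C then 1 else 0)) / real d ^ k"
    unfolding main by (simp add: norm_divide norm_power)
  also have "\<dots> \<le> (\<Sum>t\<in>Tset k d. E t - (if t \<in> C then 1 else 0)) / real d ^ k"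
  proof (rule divide_right_mono)
    show "norm (\<Sum>t\<in>Tset k d. F i d t - complex_of_real (if t \<in> C then 1 else 0)) \<le> (\<Sum>t\<in>Tset k d. E t - (if t \<in> C then 1 else 0))"
      using termb by (intro order_trans[OF norm_sum] sum_mono) auto
  qed simp
  also have "(\<Sum>t\<in>Tset k d. E t - (if t \<in> C then 1 else 0)) = real d * G l d ^ (k - 1) - real d"
  proof -
    have "(\<Sum>t\<in>Tset k d. E t) = real d * G l d ^ (k - 1)"
    proof -
      have kk: "k = Suc (k - 1)" using k2 by simp
      have "(\<Sum>t\<in>Tset (Suc (k-1)) d. exp (- l * (\<Sum>m\<in>{1..<Suc (k-1)}. norm (ee (real (t ! m) / real d) - ee (real (t ! 0) / real d)) ^ 2)))
          = real d * G l d ^ (k - 1)" by (rule sum_Tset[OF d])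
      then show ?thesis unfolding E_def Sg_def using kk by simp
    qed
    then show ?thesis using indsum by (simp add: sum_subtractf)
  qed
  also have "(real d * G l d ^ (k - 1) - real d) / real d ^ k = (G l d ^ (k - 1) - 1) / real d ^ (k - 1)"
  proof -
    have "real d ^ k = real d * real d ^ (k - 1)" using k2 by (intro pow_pred) simp
    then show ?thesis using d by (simp add: field_simps)
  qed
  also have "\<dots> \<le> real (k - 1) * G l d ^ (k - 2) * (G l d - 1) / real d ^ (k - 1)"
  proof -
    have "G l d ^ (k - 1) - 1 \<le> real (k - 1) * G l d ^ (k - 1 - 1) * (G l d - 1)"
      by (rule pow_minus_one_le[OF G_ge_1[OF d, of l]])
    moreover have "k - 1 - 1 = k - 2" by simp
    ultimately have "G l d ^ (k - 1) - 1 \<le> real (k - 1) * G l d ^ (k - 2) * (G l d - 1)" by simp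
    then show ?thesis by (rule divide_right_mono) simp
  qed
  also have "\<dots> \<le> real (k - 1) * real d ^ (k - 2) * (G l d - 1) / real d ^ (k - 1)"
  proof -
    have g1: "1 \<le> G l d" using G_ge_1[OF d, of l] .
    have "G l d ^ (k - 2) \<le> real d ^ (k - 2)" using G_le_d[of l d] l0 g1 by (intro power_mono) auto
    moreover have "G l d - 1 \<ge> 0" using G_ge_1[OF d] by simp
    ultimately show ?thesis by (intro divide_right_mono mult_right_mono mult_left_mono) auto
  qed
  also have "\<dots> = real (k - 1) * (G l d - 1) / real d"
  proof -
    have "real d ^ (k - 1) = real d * real d ^ (k - 1 - 1)" using k2 by (intro pow_pred) simp
    then have "real d ^ (k - 1) = real d * real d ^ (k - 2)" by (simp add: numeral_2_eq_2)
    then show ?thesis using d by (simp add: field_simps)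
  qed
  also have "\<dots> \<le> real (k - 1) * (3 * real d / sqrt l) / real d"
    using G_minus_1[OF d l0] d by (intro divide_right_mono mult_left_mono) auto
  also have "\<dots> = 3 * real (k - 1) / sqrt l" using d by (simp add: field_simps)
  finally show ?thesis unfolding l_def .
qed

end


context walk_ctx2 begin

definition Kc :: real where "Kc = 3 * real (k - 1) / sqrt (a^2 / 2)"

lemma Kc_nonneg: "Kc \<ge> 0" unfolding Kc_def by simp

lemma EX_err:
  assumes i: "i \<ge> 1"
  shows "\<bar>EXvis k \<sigma> i - hsum k i\<bar> \<le> (\<Sum>d\<in>{d. d dvd i}. Kc / sqrt (real i))"
proof -
  have fin: "finite {d. d dvd i}" using i by simp
  have "EXvis k \<sigma> i - hsum k i = (\<Sum>d\<in>{d. d dvd i}. mu d * (Pd i d - 1 / real d ^ (k - 1)))"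
    unfolding EXvis_decomp[OF i] hsum_def by (simp add: sum_subtractf right_diff_distrib)
  also have "\<bar>\<dots>\<bar> \<le> (\<Sum>d\<in>{d. d dvd i}. \<bar>mu d * (Pd i d - 1 / real d ^ (k - 1))\<bar>)" by (rule sum_abs)
  also have "\<dots> \<le> (\<Sum>d\<in>{d. d dvd i}. Kc / sqrt (real i))"
  proof (rule sum_mono)
    fix d assume "d \<in> {d. d dvd i}"
    then have dd: "d dvd i" by simp
    have "d \<noteq> 0" using dd i by (intro notI) simp
    then have d1: "d \<ge> 1" by simp
    have "\<bar>mu d * (Pd i d - 1 / real d ^ (k - 1))\<bar> \<le> 1 * \<bar>Pd i d - 1 / real d ^ (k - 1)\<bar>"
      unfolding abs_mult using mu_abs_le[of d] by (intro mult_right_mono) auto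
    also have "\<dots> \<le> 3 * real (k - 1) / sqrt (real i * a^2 / 2)" using Pd_bound[OF i d1 dd] by simp
    also have "\<dots> = Kc / sqrt (real i)"
    proof -
      have e: "real i * a^2 / 2 = (a^2 / 2) * real i" by simp
      have "sqrt (real i * a^2 / 2) = sqrt (a^2 / 2) * sqrt (real i)" unfolding e by (rule real_sqrt_mult)
      then show ?thesis unfolding Kc_def by (simp only: divide_divide_eq_left)
    qed
    finally show "\<bar>mu d * (Pd i d - 1 / real d ^ (k - 1))\<bar> \<le> Kc / sqrt (real i)" .
  qed
  finally show ?thesis .
qed

lemma sum_div_sqrt:
  assumes n: "n \<ge> 1"
  shows "(\<Sum>i\<in>{1..n}. \<Sum>d\<in>{d. d dvd i}. 1 / sqrt (real i)) \<le> 2 * sqrt (real n) * (\<Sum>d\<in>{1..n}. 1 / real d)"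
proof -
  have eq1: "{i\<in>{1..n}. True} = {1..n}" by auto
  have "(\<Sum>i\<in>{1..n}. \<Sum>d\<in>{d. d dvd i}. 1 / sqrt (real i))
      = (\<Sum>i\<in>{i\<in>{1..n}. True}. \<Sum>d\<in>{d. d dvd i}. 1 / sqrt (real i))" unfolding eq1 ..
  also have "\<dots> = (\<Sum>d\<in>{1..n}. \<Sum>j\<in>{j\<in>{1..n div d}. True}. 1 / sqrt (real (d * j)))"
    by (rule divisor_sum_swap)
  also have "\<dots> \<le> (\<Sum>d\<in>{1..n}. 2 * sqrt (real n) * (1 / real d))"
  proof (rule sum_mono)
    fix d assume d: "d \<in> {1..n}"
    have sd: "sqrt (real d) > 0" using d by simp
    have eq2: "{j\<in>{1..n div d}. True} = {1..n div d}" by auto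
    have "(\<Sum>j\<in>{j\<in>{1..n div d}. True}. 1 / sqrt (real (d * j))) = (1 / sqrt (real d)) * (\<Sum>j\<in>{1..n div d}. 1 / sqrt (real j))"
      unfolding eq2 by (simp add: sum_distrib_left real_sqrt_mult)
    also have "\<dots> \<le> (1 / sqrt (real d)) * (2 * sqrt (real (n div d)))"
      using sum_inv_sqrt_le[of "n div d"] sd by (intro mult_left_mono) auto
    also have "sqrt (real (n div d)) \<le> sqrt (real n / real d)"
    proof -
      have "d * (n div d) \<le> n" by (rule times_div_less_eq_dividend)
      then have "real d * real (n div d) \<le> real n" by (metis of_nat_le_iff of_nat_mult)
      then have "real (n div d) \<le> real n / real d" using d by (simp add: pos_le_divide_eq mult.commute)
      then show ?thesis by simp
    qed
    then have "(1 / sqrt (real d)) * (2 * sqrt (real (n div d))) \<le> (1 / sqrt (real d)) * (2 * sqrt (real n / real d))"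
      using sd by (intro mult_left_mono) auto
    also have "\<dots> = 2 * sqrt (real n) * (1 / real d)"
      using sd d by (simp add: real_sqrt_divide field_simps)
    finally show "(\<Sum>j\<in>{j\<in>{1..n div d}. True}. 1 / sqrt (real (d * j))) \<le> 2 * sqrt (real n) * (1 / real d)" .
  qed
  also have "\<dots> = 2 * sqrt (real n) * (\<Sum>d\<in>{1..n}. 1 / real d)" by (simp add: sum_distrib_left)
  finally show ?thesis .
qed

lemma ESbar_raw:
  assumes p: "prime p" and b: "b < p" and n: "n \<ge> 1"
  shows "\<bar>ESbar k \<sigma> n b p - Wc k p b\<bar>
     \<le> ((2 * Kc + 2) * (\<Sum>d\<in>{1..n}. 1 / real d) + 20) / sqrt (real n)"
proof -
  let ?I = "{i\<in>{1..n}. i mod p = b}"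
  let ?H = "\<Sum>d\<in>{1..n}. 1 / real d"
  have H0: "?H \<ge> 0" by (intro sum_nonneg) simp
  have sn: "sqrt (real n) > 0" using n by simp
  have e1: "\<bar>(\<Sum>i\<in>?I. EXvis k \<sigma> i) - (\<Sum>i\<in>?I. hsum k i)\<bar> \<le> Kc * (2 * sqrt (real n) * ?H)"
  proof -
    have "\<bar>(\<Sum>i\<in>?I. EXvis k \<sigma> i) - (\<Sum>i\<in>?I. hsum k i)\<bar> \<le> (\<Sum>i\<in>?I. \<bar>EXvis k \<sigma> i - hsum k i\<bar>)"
      by (simp add: sum_subtractf[symmetric] sum_abs)
    also have "\<dots> \<le> (\<Sum>i\<in>?I. \<Sum>d\<in>{d. d dvd i}. Kc / sqrt (real i))"
      by (intro sum_mono EX_err) auto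
    also have "\<dots> \<le> (\<Sum>i\<in>{1..n}. \<Sum>d\<in>{d. d dvd i}. Kc / sqrt (real i))"
      by (rule sum_mono2) (auto intro!: sum_nonneg simp: Kc_nonneg)
    also have "\<dots> = Kc * (\<Sum>i\<in>{1..n}. \<Sum>d\<in>{d. d dvd i}. 1 / sqrt (real i))"
      unfolding sum_distrib_left by simp
    also have "\<dots> \<le> Kc * (2 * sqrt (real n) * ?H)"
      using sum_div_sqrt[OF n] Kc_nonneg by (intro mult_left_mono) auto
    finally show ?thesis .
  qed
  have e2: "\<bar>(\<Sum>i\<in>?I. hsum k i) - real n * Wc k p b\<bar> \<le> 2 * ?H + 20 * sqrt (real n)"
    using main_term[OF k2 p b n] .
  have "ESbar k \<sigma> n b p - Wc k p b = ((\<Sum>i\<in>?I. EXvis k \<sigma> i) - real n * Wc k p b) / real n"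
    unfolding ESbar_def using n by (simp add: field_simps)
  then have "\<bar>ESbar k \<sigma> n b p - Wc k p b\<bar> = \<bar>(\<Sum>i\<in>?I. EXvis k \<sigma> i) - real n * Wc k p b\<bar> / real n"
    by (simp add: abs_divide)
  also have "\<dots> \<le> (Kc * (2 * sqrt (real n) * ?H) + (2 * ?H + 20 * sqrt (real n))) / real n"
    using e1 e2 n by (intro divide_right_mono) auto
  also have "\<dots> \<le> (Kc * (2 * sqrt (real n) * ?H) + (2 * sqrt (real n) * ?H + 20 * sqrt (real n))) / real n"
  proof -
    have "1 \<le> sqrt (real n)" using n by simp
    then have "2 * ?H \<le> 2 * sqrt (real n) * ?H" using H0 by (simp add: mult_right_mono)
    then show ?thesis using n by (intro divide_right_mono) auto
  qed
  also have "\<dots> = sqrt (real n) * ((2 * Kc + 2) * ?H + 20) / real n" by (simp add: algebra_simps)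
  also have "\<dots> = ((2 * Kc + 2) * ?H + 20) / sqrt (real n)"
  proof -
    have nn: "sqrt (real n) * sqrt (real n) = real n" by simp
    have "sqrt (real n) * ((2 * Kc + 2) * ?H + 20) / (sqrt (real n) * sqrt (real n)) = ((2 * Kc + 2) * ?H + 20) / sqrt (real n)"
      using sn by (simp only: mult_divide_mult_cancel_left_if) simp
    then show ?thesis unfolding nn .
  qed
  finally show ?thesis .
qed

end

lemma harm_powr_bound:
  assumes n: "n \<ge> 1" and e: "\<epsilon> > 0"
  shows "(\<Sum>d\<in>{1..n}. 1 / real d) \<le> (1 + 1 / \<epsilon>) * real n powr \<epsilon>"
proof -
  have n1: "real n \<ge> 1" using n by simp
  have "ln (real n powr \<epsilon>) \<le> real n powr \<epsilon> - 1" using n1 by (intro ln_le_minus_one) simp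
  then have "\<epsilon> * ln (real n) \<le> real n powr \<epsilon>" using n1 by (simp add: ln_powr)
  then have ln: "ln (real n) \<le> real n powr \<epsilon> / \<epsilon>" using e by (simp add: field_simps)
  have p1: "1 \<le> real n powr \<epsilon>" using n1 e by (simp add: ge_one_powr_ge_zero)
  have "(\<Sum>d\<in>{1..n}. 1 / real d) \<le> 1 + ln (real n)" by (rule harm_le_ln[OF n])
  also have "\<dots> \<le> real n powr \<epsilon> + real n powr \<epsilon> / \<epsilon>" using ln p1 by simp
  also have "\<dots> = (1 + 1 / \<epsilon>) * real n powr \<epsilon>" by (simp add: algebra_simps)
  finally show ?thesis .
qed

context walk_ctx2 begin

definition Cst :: "real \<Rightarrow> real" where "Cst \<epsilon> = (2 * Kc + 22) * (1 + 1 / \<epsilon>)"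

lemma ESbar_bound:
  assumes p: "prime p" and b: "b < p" and n: "n \<ge> 1" and e: "\<epsilon> > 0"
  shows "\<bar>ESbar k \<sigma> n b p - Wc k p b\<bar> \<le> Cst \<epsilon> * real n powr (-1/2 + \<epsilon>)"
proof -
  let ?H = "\<Sum>d\<in>{1..n}. 1 / real d"
  have n1: "real n \<ge> 1" using n by simp
  have p1: "1 \<le> real n powr \<epsilon>" using n1 e by (simp add: ge_one_powr_ge_zero)
  have sn: "sqrt (real n) > 0" using n by simp
  have hb: "?H \<le> (1 + 1 / \<epsilon>) * real n powr \<epsilon>" by (rule harm_powr_bound[OF n e])
  have "(2 * Kc + 2) * ?H + 20 \<le> (2 * Kc + 2) * ((1 + 1 / \<epsilon>) * real n powr \<epsilon>) + 20 * ((1 + 1 / \<epsilon>) * real n powr \<epsilon>)"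
  proof -
    have "(2 * Kc + 2) * ?H \<le> (2 * Kc + 2) * ((1 + 1 / \<epsilon>) * real n powr \<epsilon>)"
      using hb Kc_nonneg by (intro mult_left_mono) auto
    moreover have "1 \<le> (1 + 1 / \<epsilon>) * real n powr \<epsilon>"
    proof -
      have "1 \<le> 1 + 1 / \<epsilon>" using e by simp
      then have "1 * 1 \<le> (1 + 1 / \<epsilon>) * real n powr \<epsilon>" using p1 by (intro mult_mono) auto
      then show ?thesis by simp
    qed
    ultimately show ?thesis by linarith
  qed
  also have "\<dots> = Cst \<epsilon> * real n powr \<epsilon>" unfolding Cst_def by (simp add: algebra_simps)
  finally have num: "(2 * Kc + 2) * ?H + 20 \<le> Cst \<epsilon> * real n powr \<epsilon>" .
  have "\<bar>ESbar k \<sigma> n b p - Wc k p b\<bar> \<le> ((2 * Kc + 2) * ?H + 20) / sqrt (real n)"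
    by (rule ESbar_raw[OF p b n])
  also have "\<dots> \<le> Cst \<epsilon> * real n powr \<epsilon> / sqrt (real n)"
    using num sn by (intro divide_right_mono) auto
  also have "\<dots> = Cst \<epsilon> * real n powr (-1/2 + \<epsilon>)"
  proof -
    have ee: "(-1/2 + \<epsilon>) = -(1/2) + \<epsilon>" by simp
    have h1: "real n powr (-1/2 + \<epsilon>) = real n powr (-(1/2)) * real n powr \<epsilon>"
      unfolding ee by (rule powr_add)
    have h2: "real n powr (-(1/2)) = 1 / sqrt (real n)"
      unfolding powr_minus powr_half_sqrt[OF of_nat_0_le_iff] by (rule inverse_eq_divide)
    show ?thesis unfolding h1 h2 by simp
  qed
  finally show ?thesis .
qed

end


theorem proposition4p2:
  fixes A :: "real list set" and q k p1 :: nat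
  assumes "q \<ge> 1" and "k \<ge> 2" and "finite A" and "card A = q"
    and "\<forall>\<alpha>\<in>A. valid_type k \<alpha>"
    and "prime p1" and "p1 \<ge> 3"
  shows "\<forall>\<epsilon>>0. \<exists>C N. \<forall>\<sigma>. (\<forall>i\<ge>1. \<sigma> i \<in> A) \<longrightarrow> (\<forall>n\<ge>N.
     \<bar>ESbar k \<sigma> n 0 p1 - (real p1 ^ (k - 1) - 1) / (real p1 ^ k - 1) * (1 / zeta_nat k)\<bar>
        \<le> C * real n powr (-1/2 + \<epsilon>)
   \<and> (\<forall>a\<in>{1..<p1}.
     \<bar>ESbar k \<sigma> n a p1 - real p1 ^ (k - 1) / (real p1 ^ k - 1) * (1 / zeta_nat k)\<bar>
        \<le> C * real n powr (-1/2 + \<epsilon>)))"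
proof (intro allI impI)
  fix \<epsilon> :: real assume e: "\<epsilon> > 0"
  have k2: "k \<ge> 2" and finA: "finite A" and vA: "\<forall>\<alpha>\<in>A. valid_type k \<alpha>" and p: "prime p1"
    using assms by auto
  define E where "E = (\<Union>\<alpha>\<in>A. set \<alpha>)"
  have finE: "finite (insert 1 E)" unfolding E_def using finA by auto
  have Epos: "x > 0" if "x \<in> insert 1 E" for x
    using that vA unfolding E_def valid_type_def by auto
  define a where "a = Min (insert 1 E)"
  have a_pos: "a > 0" unfolding a_def using finE Epos by (subst Min_gr_iff) auto
  have a_le: "a \<le> x" if "\<alpha> \<in> A" "x \<in> set \<alpha>" for \<alpha> x
    unfolding a_def using finE that unfolding E_def by (intro Min_le) auto
  define C where "C = (2 * (3 * real (k - 1) / sqrt (a^2 / 2)) + 22) * (1 + 1 / \<epsilon>)"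
  show "\<exists>C N. \<forall>\<sigma>. (\<forall>i\<ge>1. \<sigma> i \<in> A) \<longrightarrow> (\<forall>n\<ge>N.
     \<bar>ESbar k \<sigma> n 0 p1 - (real p1 ^ (k - 1) - 1) / (real p1 ^ k - 1) * (1 / zeta_nat k)\<bar>
        \<le> C * real n powr (-1/2 + \<epsilon>)
   \<and> (\<forall>a\<in>{1..<p1}.
     \<bar>ESbar k \<sigma> n a p1 - real p1 ^ (k - 1) / (real p1 ^ k - 1) * (1 / zeta_nat k)\<bar>
        \<le> C * real n powr (-1/2 + \<epsilon>)))"
  proof (intro exI allI impI conjI ballI)
    fix \<sigma> :: "nat \<Rightarrow> real list" and n :: nat
    assume s: "\<forall>i\<ge>1. \<sigma> i \<in> A" and n: "n \<ge> 1"
    interpret W: walk_ctx2 k \<sigma> a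
    proof unfold_locales
      fix j :: nat assume "j \<ge> 1" then show "valid_type k (\<sigma> j)" using s vA by auto
    next
      show "a > 0" by (rule a_pos)
    next
      fix j x assume "j \<ge> 1" "x \<in> set (\<sigma> j)" then show "a \<le> x" using s a_le by auto
    next
      show "k \<ge> 2" by (rule k2)
    qed
    have CC: "W.Cst \<epsilon> = C" unfolding W.Cst_def W.Kc_def C_def ..
    have p0: "0 < p1" using p prime_gt_0_nat by blast
    show "\<bar>ESbar k \<sigma> n 0 p1 - (real p1 ^ (k - 1) - 1) / (real p1 ^ k - 1) * (1 / zeta_nat k)\<bar>
        \<le> C * real n powr (-1/2 + \<epsilon>)"
      using W.ESbar_bound[OF p p0 n e] unfolding CC Wc_def by simp
    fix b assume b: "b \<in> {1..<p1}"
    then have b0: "b \<noteq> 0" and bp: "b < p1" by auto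
    show "\<bar>ESbar k \<sigma> n b p1 - real p1 ^ (k - 1) / (real p1 ^ k - 1) * (1 / zeta_nat k)\<bar>
        \<le> C * real n powr (-1/2 + \<epsilon>)"
      using W.ESbar_bound[OF p bp n e] b0 unfolding CC Wc_def by simp
  qed
qed


end
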